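(* Let $d$ be a positive integer, let $\epsilon>0$, let $C>0$ and $\alpha>0$, and let $1\le p<2<q\le\infty$ with $\frac1p+\frac1q=1$. Put $\delta=2^{-7}\frac{\alpha p}{2-p}\epsilon^2$. There is a constant $c>0$, depending only on $d,C,\alpha,p,\epsilon$ (and not on $N$), such that the following holds. Let $\mathcal{G}$ be a finite $(d+1)$-regular graph and $N$ a positive integer such that $$\|S_n\|_{L^p(\mathcal{G})\to L^q(\mathcal{G})}\le C d^{-\alpha n}\quad\text{for all } n\le N.$$ Then for every eigenfunction $\phi$ of the discrete Laplacian on $\mathcal{G}$ with $\sum_{x\in\mathcal{G}}|\phi(x)|^2=1$, every subset $E\subset\mathcal{G}$ with $\sum_{x\in E}|\phi(x)|^2>\epsilon$ satisfies $$|E|\ge c\, d^{\delta N}.$$ (That is, $|E|\gtrsim d^{\delta N}$ as $N\to\infty$, with implied constant depending on $d,C,\alpha,p,\epsilon$.)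
   Context: $L^p(\mathcal{G})$ denotes functions on the vertex set of $\mathcal{G}$ with the counting measure. For $n\ge 0$ and $f:\mathcal{G}\to\mathbb{C}$, the operator $S_n$ is defined by $$S_n f(x)=d^{-n/2}\sum_{\gamma} f(\gamma_n),$$ the sum over all non-backtracking walks $\gamma=(\gamma_0=x,\gamma_1,\dots,\gamma_n)$ of length $n$ in $\mathcal{G}$ starting at $x$ (consecutive vertices adjacent, $\gamma_{i+1}\ne\gamma_{i-1}$). Equivalently, $S_n$ is the projection to $\mathcal{G}$ of the operator $\tilde S_n f(x)=d^{-n/2}\sum_{\operatorname{dist}(x,y)=n}f(y)$ on the $(d+1)$-regular tree $\mathcal{T}_{d+1}$ (the universal cover of $\mathcal{G}$). The discrete Laplacian is $\Delta f=\left(\frac{\sqrt d}{d+1}T_d-1\right)f$, where $T_d f(x)=\frac{1}{\sqrt d}\sum_{y\sim x}f(y)$; its eigenfunctions are exactly the eigenfunctions of $T_d$. *)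

theory Defs
  imports "HOL-Analysis.Analysis"
begin

definition graph :: "nat set \<Rightarrow> (nat \<Rightarrow> nat \<Rightarrow> bool) \<Rightarrow> bool" where
  "graph V A \<longleftrightarrow> finite V \<and> (\<forall>x y. A x y \<longrightarrow> x \<in> V \<and> y \<in> V)
     \<and> (\<forall>x y. A x y \<longrightarrow> A y x) \<and> (\<forall>x. \<not> A x x)"

definition regular_graph :: "nat \<Rightarrow> nat set \<Rightarrow> (nat \<Rightarrow> nat \<Rightarrow> bool) \<Rightarrow> bool" where
  "regular_graph k V A \<longleftrightarrow> graph V A \<and> (\<forall>x\<in>V. card {y. A x y} = k)"

definition nb_walks :: "(nat \<Rightarrow> nat \<Rightarrow> bool) \<Rightarrow> nat \<Rightarrow> nat \<Rightarrow> nat list set" where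
  "nb_walks A x n = {\<gamma>. length \<gamma> = Suc n \<and> \<gamma> ! 0 = x
      \<and> (\<forall>i<n. A (\<gamma> ! i) (\<gamma> ! Suc i))
      \<and> (\<forall>i. 0 < i \<and> i < n \<longrightarrow> \<gamma> ! Suc i \<noteq> \<gamma> ! (i - 1))}"

definition S_op :: "nat \<Rightarrow> (nat \<Rightarrow> nat \<Rightarrow> bool) \<Rightarrow> nat \<Rightarrow> (nat \<Rightarrow> complex) \<Rightarrow> nat \<Rightarrow> complex" where
  "S_op d A n f x = complex_of_real (real d powr (- real n / 2)) * (\<Sum>\<gamma>\<in>nb_walks A x n. f (last \<gamma>))"

definition lp_norm :: "nat set \<Rightarrow> ereal \<Rightarrow> (nat \<Rightarrow> complex) \<Rightarrow> real" where
  "lp_norm V p f = (if p = \<infinity> then Max (insert 0 ((\<lambda>x. cmod (f x)) ` V))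
      else (\<Sum>x\<in>V. cmod (f x) powr real_of_ereal p) powr (1 / real_of_ereal p))"

definition op_norm :: "nat set \<Rightarrow> ereal \<Rightarrow> ereal \<Rightarrow> ((nat \<Rightarrow> complex) \<Rightarrow> (nat \<Rightarrow> complex)) \<Rightarrow> real" where
  "op_norm V p q T = Sup {lp_norm V q (T f) | f. lp_norm V p f \<le> 1}"

definition T_op :: "nat \<Rightarrow> (nat \<Rightarrow> nat \<Rightarrow> bool) \<Rightarrow> (nat \<Rightarrow> complex) \<Rightarrow> nat \<Rightarrow> complex" where
  "T_op d A f x = complex_of_real (1 / sqrt (real d)) * (\<Sum>y\<in>{y. A x y}. f y)"

definition laplacian :: "nat \<Rightarrow> (nat \<Rightarrow> nat \<Rightarrow> bool) \<Rightarrow> (nat \<Rightarrow> complex) \<Rightarrow> nat \<Rightarrow> complex" where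
  "laplacian d A f x = complex_of_real (sqrt (real d) / (real d + 1)) * T_op d A f x - f x"

definition laplace_eigenfunction :: "nat \<Rightarrow> nat set \<Rightarrow> (nat \<Rightarrow> nat \<Rightarrow> bool) \<Rightarrow> (nat \<Rightarrow> complex) \<Rightarrow> bool" where
  "laplace_eigenfunction d V A \<phi> \<longleftrightarrow> (\<exists>x\<in>V. \<phi> x \<noteq> 0) \<and>
     (\<exists>ev::complex. \<forall>x\<in>V. laplacian d A \<phi> x = ev * \<phi> x)"

end

theory Submission
  imports Defs
begin


lemma W0: "nb_walks A x 0 = {[x]}"
  unfolding nb_walks_def by (auto simp: length_Suc_conv)

lemma W_Suc_mem: "\<gamma>' \<in> nb_walks A x (Suc n) \<longleftrightarrow>
   (\<exists>y \<gamma>. \<gamma>' = x # \<gamma> \<and> A x y \<and> \<gamma> \<in> nb_walks A y n \<and> (0 < n \<longrightarrow> \<gamma> ! 1 \<noteq> x))"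
proof
  assume h: "\<gamma>' \<in> nb_walks A x (Suc n)"
  then have hl: "length \<gamma>' = Suc (Suc n)" and h0: "\<gamma>'!0 = x"
    and hs: "\<forall>i<Suc n. A (\<gamma>'!i) (\<gamma>'!Suc i)"
    and hn: "\<forall>i. 0 < i \<and> i < Suc n \<longrightarrow> \<gamma>'!Suc i \<noteq> \<gamma>'!(i-1)"
    unfolding nb_walks_def by blast+
  then obtain z \<gamma> where g: "\<gamma>' = z # \<gamma>" and len: "length \<gamma> = Suc n"
    by (auto simp: length_Suc_conv)
  from h0 g have z: "z = x" by simp
  from hs g z have s0: "A x (\<gamma>!0)" by (metis nth_Cons_0 nth_Cons_Suc zero_less_Suc)
  have steps: "\<forall>i<n. A (\<gamma>!i) (\<gamma>!Suc i)"
  proof (intro allI impI)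
    fix i assume "i < n"
    then have "Suc i < Suc n" by simp
    with hs have "A (\<gamma>'!Suc i) (\<gamma>'!Suc (Suc i))" by blast
    with g show "A (\<gamma>!i) (\<gamma>!Suc i)" by simp
  qed
  have nb: "\<forall>i. 0 < i \<and> i < n \<longrightarrow> \<gamma>!Suc i \<noteq> \<gamma>!(i-1)"
  proof (intro allI impI)
    fix i assume a: "0 < i \<and> i < n"
    then have "0 < Suc i \<and> Suc i < Suc n" by simp
    with hn have "\<gamma>'!Suc (Suc i) \<noteq> \<gamma>'!(Suc i - 1)" by blast
    with g a show "\<gamma>!Suc i \<noteq> \<gamma>!(i-1)" by (cases i) auto
  qed
  have b1: "0 < n \<longrightarrow> \<gamma>!1 \<noteq> x"
  proof
    assume "0 < n"
    then have "0 < (1::nat) \<and> 1 < Suc n" by simp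
    with hn have "\<gamma>'!Suc 1 \<noteq> \<gamma>'!(1-1)" by blast
    with g z show "\<gamma>!1 \<noteq> x" by simp
  qed
  have "\<gamma> \<in> nb_walks A (\<gamma>!0) n" unfolding nb_walks_def using len steps nb by simp
  with g z s0 b1 show "\<exists>y \<gamma>. \<gamma>' = x # \<gamma> \<and> A x y \<and> \<gamma> \<in> nb_walks A y n \<and> (0 < n \<longrightarrow> \<gamma> ! 1 \<noteq> x)"
    by blast
next
  assume "\<exists>y \<gamma>. \<gamma>' = x # \<gamma> \<and> A x y \<and> \<gamma> \<in> nb_walks A y n \<and> (0 < n \<longrightarrow> \<gamma> ! 1 \<noteq> x)"
  then obtain y \<gamma> where g: "\<gamma>' = x # \<gamma>" and a: "A x y" and w: "\<gamma> \<in> nb_walks A y n"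
    and b1: "0 < n \<longrightarrow> \<gamma> ! 1 \<noteq> x" by blast
  from w have len: "length \<gamma> = Suc n" and g0: "\<gamma>!0 = y"
    and steps: "\<forall>i<n. A (\<gamma>!i) (\<gamma>!Suc i)"
    and nb: "\<forall>i. 0 < i \<and> i < n \<longrightarrow> \<gamma>!Suc i \<noteq> \<gamma>!(i-1)"
    unfolding nb_walks_def by auto
  have s: "\<forall>i<Suc n. A (\<gamma>'!i) (\<gamma>'!Suc i)"
  proof (intro allI impI)
    fix i assume "i < Suc n"
    then show "A (\<gamma>'!i) (\<gamma>'!Suc i)" using g a g0 steps by (cases i) auto
  qed
  have n2: "\<forall>i. 0 < i \<and> i < Suc n \<longrightarrow> \<gamma>'!Suc i \<noteq> \<gamma>'!(i-1)"
  proof (intro allI impI)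
    fix i assume i: "0 < i \<and> i < Suc n"
    then obtain j where j: "i = Suc j" by (cases i) auto
    show "\<gamma>'!Suc i \<noteq> \<gamma>'!(i-1)"
    proof (cases j)
      case 0 then show ?thesis using g j b1 i by simp
    next
      case (Suc k) then show ?thesis using g j nb i by auto
    qed
  qed
  show "\<gamma>' \<in> nb_walks A x (Suc n)" unfolding nb_walks_def using g len s n2 by simp
qed

locale rg =
  fixes d :: nat and V :: "nat set" and A :: "nat \<Rightarrow> nat \<Rightarrow> bool"
  assumes reg: "regular_graph (d+1) V A" and d1: "1 \<le> d"
begin

lemma finV: "finite V" using reg unfolding regular_graph_def graph_def by blast
lemma adjV: "A x y \<Longrightarrow> x \<in> V \<and> y \<in> V" using reg unfolding regular_graph_def graph_def by blast
lemma symA: "A x y \<Longrightarrow> A y x" using reg unfolding regular_graph_def graph_def by blast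
lemma irrA: "\<not> A x x" using reg unfolding regular_graph_def graph_def by blast
lemma card_nbr: "x \<in> V \<Longrightarrow> card {y. A x y} = d + 1" using reg unfolding regular_graph_def by blast
lemma fin_nbr: "finite {y. A x y}" by (rule finite_subset[OF _ finV]) (auto dest: adjV)
lemma nbr_out: "x \<notin> V \<Longrightarrow> {y. A x y} = {}" by (auto dest: adjV)

lemma W_Suc_eq: "nb_walks A x (Suc n) =
   (\<lambda>(y,\<gamma>). x # \<gamma>) ` (SIGMA y:{y. A x y}. {\<gamma> \<in> nb_walks A y n. 0 < n \<longrightarrow> \<gamma>!1 \<noteq> x})"
  by (auto simp: W_Suc_mem image_iff; blast)

lemma W_head: "\<gamma> \<in> nb_walks A y n \<Longrightarrow> \<gamma>!0 = y" unfolding nb_walks_def by blast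
lemma W_len: "\<gamma> \<in> nb_walks A y n \<Longrightarrow> length \<gamma> = Suc n" unfolding nb_walks_def by blast

lemma W_fin: "finite (nb_walks A x n)"
proof (induction n arbitrary: x)
  case 0 then show ?case by (simp add: W0)
next
  case (Suc n)
  show ?case unfolding W_Suc_eq
    by (rule finite_imageI, rule finite_SigmaI[OF fin_nbr]) (use Suc in auto)
qed

lemma inj_cons_W: "inj_on (\<lambda>(y,\<gamma>). x # \<gamma>) (SIGMA y:{y. A x y}. {\<gamma> \<in> nb_walks A y n. P y \<gamma>})"
  by (auto simp: inj_on_def dest: W_head)

lemma sum_W_Suc: "(\<Sum>\<gamma>\<in>nb_walks A x (Suc n). h \<gamma>) =
   (\<Sum>y\<in>{y. A x y}. \<Sum>\<gamma>\<in>{\<gamma> \<in> nb_walks A y n. 0 < n \<longrightarrow> \<gamma>!1 \<noteq> x}. h (x # \<gamma>))"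
proof -
  have "(\<Sum>\<gamma>\<in>nb_walks A x (Suc n). h \<gamma>) =
     (\<Sum>z\<in>(SIGMA y:{y. A x y}. {\<gamma> \<in> nb_walks A y n. 0 < n \<longrightarrow> \<gamma>!1 \<noteq> x}). h (x # snd z))"
    unfolding W_Suc_eq
    by (subst sum.reindex[OF inj_cons_W]) (simp add: case_prod_beta)
  also have "\<dots> = (\<Sum>y\<in>{y. A x y}. \<Sum>\<gamma>\<in>{\<gamma> \<in> nb_walks A y n. 0 < n \<longrightarrow> \<gamma>!1 \<noteq> x}. h (x # \<gamma>))"
    by (subst sum.Sigma[OF fin_nbr]) (auto simp: W_fin case_prod_beta)
  finally show ?thesis .
qed

definition Aw :: "(nat \<Rightarrow> complex) \<Rightarrow> nat \<Rightarrow> nat \<Rightarrow> complex" where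
  "Aw f x n = (\<Sum>\<gamma>\<in>nb_walks A x n. f (last \<gamma>))"

lemma Aw_0: "Aw f x 0 = f x" by (simp add: Aw_def W0)

lemma W_ne: "\<gamma> \<in> nb_walks A y n \<Longrightarrow> \<gamma> \<noteq> []" using W_len[of \<gamma>] by auto

lemma last_cons_W: "\<gamma> \<in> nb_walks A y n \<Longrightarrow> last (x # \<gamma>) = last \<gamma>"
  using W_len[of \<gamma>] by (cases \<gamma>) auto

lemma Aw_1: "Aw f x (Suc 0) = (\<Sum>y\<in>{y. A x y}. f y)"
  unfolding Aw_def sum_W_Suc by (simp add: W0)

lemma Aw_rec:
  assumes x: "x \<in> V"
  shows "(\<Sum>y\<in>{y. A x y}. Aw f y (Suc n)) = Aw f x (Suc (Suc n)) + of_nat (if n = 0 then d+1 else d) * Aw f x n"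
proof -
  let ?N = "{y. A x y}"
  have split: "Aw f y (Suc n) = (\<Sum>\<gamma>\<in>{\<gamma> \<in> nb_walks A y (Suc n). \<gamma>!1 \<noteq> x}. f (last \<gamma>))
      + (\<Sum>\<gamma>\<in>nb_walks A y (Suc n). if \<gamma>!1 = x then f (last \<gamma>) else 0)" for y
    unfolding Aw_def by (simp add: sum.inter_filter[OF W_fin] flip: sum.distrib) (rule sum.cong, auto)
  have p1: "(\<Sum>y\<in>?N. \<Sum>\<gamma>\<in>{\<gamma> \<in> nb_walks A y (Suc n). \<gamma>!1 \<noteq> x}. f (last \<gamma>)) = Aw f x (Suc (Suc n))"
    unfolding Aw_def sum_W_Suc[where x=x and n="Suc n"]
    by (rule sum.cong, simp, rule sum.cong, auto dest: W_ne)
  have p2y: "(\<Sum>\<gamma>\<in>nb_walks A y (Suc n). if \<gamma>!1 = x then f (last \<gamma>) else 0)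
      = (\<Sum>\<delta>\<in>nb_walks A x n. if (0 < n \<longrightarrow> \<delta>!1 \<noteq> y) then f (last \<delta>) else 0)" if y: "A x y" for y
  proof -
    have "(\<Sum>\<gamma>\<in>nb_walks A y (Suc n). if \<gamma>!1 = x then f (last \<gamma>) else 0)
      = (\<Sum>z\<in>{z. A y z}. \<Sum>\<delta>\<in>{\<delta> \<in> nb_walks A z n. 0 < n \<longrightarrow> \<delta>!1 \<noteq> y}.
           if (y # \<delta>)!1 = x then f (last (y # \<delta>)) else 0)"
      by (rule sum_W_Suc)
    also have "\<dots> = (\<Sum>z\<in>{z. A y z}. if z = x then (\<Sum>\<delta>\<in>{\<delta> \<in> nb_walks A z n. 0 < n \<longrightarrow> \<delta>!1 \<noteq> y}.
           f (last \<delta>)) else 0)"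
      by (rule sum.cong, simp, auto simp: W_head dest: W_ne intro!: sum.cong sum.neutral)
    also have "\<dots> = (\<Sum>\<delta>\<in>{\<delta> \<in> nb_walks A x n. 0 < n \<longrightarrow> \<delta>!1 \<noteq> y}. f (last \<delta>))"
      using y symA by (simp add: sum.delta[OF fin_nbr])
    also have "\<dots> = (\<Sum>\<delta>\<in>nb_walks A x n. if (0 < n \<longrightarrow> \<delta>!1 \<noteq> y) then f (last \<delta>) else 0)"
      by (simp add: sum.inter_filter[OF W_fin])
    finally show ?thesis .
  qed
  have p2: "(\<Sum>y\<in>?N. \<Sum>\<gamma>\<in>nb_walks A y (Suc n). if \<gamma>!1 = x then f (last \<gamma>) else 0)
      = of_nat (if n = 0 then d+1 else d) * Aw f x n"
  proof -
    have "(\<Sum>y\<in>?N. \<Sum>\<gamma>\<in>nb_walks A y (Suc n). if \<gamma>!1 = x then f (last \<gamma>) else 0)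
       = (\<Sum>y\<in>?N. \<Sum>\<delta>\<in>nb_walks A x n. if (0 < n \<longrightarrow> \<delta>!1 \<noteq> y) then f (last \<delta>) else 0)"
      by (rule sum.cong[OF refl], rule p2y, simp)
    also have "\<dots> = (\<Sum>\<delta>\<in>nb_walks A x n. \<Sum>y\<in>?N. if (0 < n \<longrightarrow> \<delta>!1 \<noteq> y) then f (last \<delta>) else 0)"
      by (rule sum.swap)
    also have "\<dots> = (\<Sum>\<delta>\<in>nb_walks A x n. of_nat (if n = 0 then d+1 else d) * f (last \<delta>))"
    proof (rule sum.cong[OF refl])
      fix \<delta> assume dl: "\<delta> \<in> nb_walks A x n"
      have "(\<Sum>y\<in>?N. if (0 < n \<longrightarrow> \<delta>!1 \<noteq> y) then f (last \<delta>) else 0)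
          = of_nat (card {y \<in> ?N. 0 < n \<longrightarrow> \<delta>!1 \<noteq> y}) * f (last \<delta>)"
        by (simp add: sum.inter_filter[OF fin_nbr, symmetric])
      also have "card {y \<in> ?N. 0 < n \<longrightarrow> \<delta>!1 \<noteq> y} = (if n = 0 then d+1 else d)"
      proof (cases "n = 0")
        case True then show ?thesis using card_nbr[OF x] by simp
      next
        case False
        then have "A (\<delta>!0) (\<delta>!Suc 0)" using dl unfolding nb_walks_def by blast
        then have "\<delta>!1 \<in> ?N" using W_head[OF dl] by simp
        moreover have "{y \<in> ?N. 0 < n \<longrightarrow> \<delta>!1 \<noteq> y} = ?N - {\<delta>!1}" using False by auto
        ultimately show ?thesis using False card_nbr[OF x] fin_nbr by simp
      qed
      finally show "(\<Sum>y\<in>?N. if (0 < n \<longrightarrow> \<delta>!1 \<noteq> y) then f (last \<delta>) else 0)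
          = of_nat (if n = 0 then d+1 else d) * f (last \<delta>)" .
    qed
    also have "\<dots> = of_nat (if n = 0 then d+1 else d) * Aw f x n"
      unfolding Aw_def by (simp add: sum_distrib_left)
    finally show ?thesis .
  qed
  show ?thesis using p1 p2 by (simp add: split sum.distrib)
qed

end




definition absd :: "nat \<Rightarrow> nat \<Rightarrow> nat" where "absd a b = (if b \<le> a then a - b else b - a)"

lemma absd_step: "(Suc (absd a (Suc b)) = absd a (Suc (Suc b)) \<and> absd (absd a (Suc b)) 1 = absd a b) \<or>
                  (Suc (absd a (Suc b)) = absd a b \<and> absd (absd a (Suc b)) 1 = absd a (Suc (Suc b)))"
  unfolding absd_def by auto

fun dval :: "complex \<Rightarrow> nat \<Rightarrow> complex" where
  "dval \<mu> 0 = 2"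
| "dval \<mu> (Suc 0) = \<mu>"
| "dval \<mu> (Suc (Suc n)) = \<mu> * dval \<mu> (Suc n) - dval \<mu> n"

lemma dval_1: "\<mu> * dval \<mu> k = dval \<mu> (Suc k) + dval \<mu> (absd k 1)"
  by (cases k) (auto simp: absd_def)

lemma dval_prod: "dval \<mu> a * dval \<mu> b = dval \<mu> (a + b) + dval \<mu> (absd a b)"
proof (induction b arbitrary: a rule: less_induct)
  case (less b)
  consider "b = 0" | "b = 1" | b' where "b = Suc (Suc b')" by (metis One_nat_def not0_implies_Suc)
  then show ?case
  proof cases
    case 1 then show ?thesis by (simp add: absd_def)
  next
    case 2 then show ?thesis using dval_1[of \<mu> a] by (simp add: mult.commute)
  next
    case 3
    have "dval \<mu> a * dval \<mu> b = \<mu> * (dval \<mu> a * dval \<mu> (Suc b')) - dval \<mu> a * dval \<mu> b'"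
      using 3 by (simp add: algebra_simps)
    also have "\<dots> = \<mu> * dval \<mu> (a + Suc b') + \<mu> * dval \<mu> (absd a (Suc b')) - dval \<mu> (a + b') - dval \<mu> (absd a b')"
      using less.IH[of "Suc b'" a] less.IH[of b' a] 3 by (simp add: algebra_simps)
    also have "\<mu> * dval \<mu> (a + Suc b') = dval \<mu> (a + b) + dval \<mu> (a + b')"
      using dval_1[of \<mu> "a + Suc b'"] 3 by (simp add: absd_def)
    also have "\<mu> * dval \<mu> (absd a (Suc b')) = dval \<mu> (Suc (absd a (Suc b'))) + dval \<mu> (absd (absd a (Suc b')) 1)"
      by (rule dval_1)
    finally show ?thesis using absd_step[of a b'] 3 by auto
  qed
qed

context rg begin

definition T :: "(nat \<Rightarrow> complex) \<Rightarrow> nat \<Rightarrow> complex" where "T f = T_op d A f"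
definition Rs :: "(nat \<Rightarrow> complex) \<Rightarrow> nat \<Rightarrow> complex" where "Rs f = (\<lambda>x. if x \<in> V then f x else 0)"
definition ip :: "(nat \<Rightarrow> complex) \<Rightarrow> (nat \<Rightarrow> complex) \<Rightarrow> complex" where
  "ip u v = (\<Sum>x\<in>V. u x * cnj (v x))"

lemma T_eq: "T f x = of_real (1 / sqrt (real d)) * (\<Sum>y\<in>{y. A x y}. f y)"
  by (simp add: T_def T_op_def)

lemma T_out: "x \<notin> V \<Longrightarrow> T f x = 0" by (simp add: T_eq nbr_out)

lemma T_local: "(\<And>x. x \<in> V \<Longrightarrow> f x = g x) \<Longrightarrow> T f = T g"
  unfolding T_def T_op_def by (intro ext) (auto intro!: sum.cong dest: adjV)

lemma T_Rs: "T (Rs f) = T f" by (rule T_local) (simp add: Rs_def)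

lemma Rs_T: "Rs (T f) = T f" by (auto simp: Rs_def T_out)

lemma T_diff: "T (\<lambda>x. f x - g x) = (\<lambda>x. T f x - T g x)"
  by (rule ext) (simp add: T_eq sum_subtractf algebra_simps)

lemma T_add: "T (\<lambda>x. f x + g x) = (\<lambda>x. T f x + T g x)"
  by (rule ext) (simp add: T_eq sum.distrib algebra_simps)

lemma T_scale: "T (\<lambda>x. c * f x) = (\<lambda>x. c * T f x)"
  by (rule ext) (simp add: T_eq sum_distrib_left mult.left_commute)

lemma ip_diff_left: "ip (\<lambda>x. u x - w x) v = ip u v - ip w v"
  by (simp add: ip_def sum_subtractf algebra_simps)
lemma ip_add_left: "ip (\<lambda>x. u x + w x) v = ip u v + ip w v"
  by (simp add: ip_def sum.distrib algebra_simps)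
lemma ip_diff_right: "ip u (\<lambda>x. v x - w x) = ip u v - ip u w"
  by (simp add: ip_def sum_subtractf algebra_simps)
lemma ip_add_right: "ip u (\<lambda>x. v x + w x) = ip u v + ip u w"
  by (simp add: ip_def sum.distrib algebra_simps)
lemma ip_scale_left: "ip (\<lambda>x. c * u x) v = c * ip u v"
  by (simp add: ip_def sum_distrib_left algebra_simps)
lemma ip_scale_right: "ip u (\<lambda>x. c * v x) = cnj c * ip u v"
  by (simp add: ip_def sum_distrib_left algebra_simps)
lemma ip_local_left: "(\<And>x. x \<in> V \<Longrightarrow> u x = w x) \<Longrightarrow> ip u v = ip w v"
  by (simp add: ip_def)
lemma ip_local_right: "(\<And>x. x \<in> V \<Longrightarrow> v x = w x) \<Longrightarrow> ip u v = ip u w"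
  by (simp add: ip_def)
lemma ip_Rs_left: "ip (Rs u) v = ip u v" by (rule ip_local_left) (simp add: Rs_def)
lemma ip_Rs_right: "ip u (Rs v) = ip u v" by (rule ip_local_right) (simp add: Rs_def)

lemma T_sa: "ip (T u) v = ip u (T v)"
proof -
  have r: "(\<Sum>y\<in>{y. A x y}. F y) = (\<Sum>y\<in>V. if A x y then F y else 0)" for x and F :: "nat \<Rightarrow> complex"
  proof -
    have "{y. A x y} = {y \<in> V. A x y}" by (auto dest: adjV)
    then show ?thesis by (simp add: sum.inter_filter[OF finV])
  qed
  let ?s = "of_real (1 / sqrt (real d)) :: complex"
  have "ip (T u) v = ?s * (\<Sum>x\<in>V. \<Sum>y\<in>V. if A x y then u y * cnj (v x) else 0)"
    unfolding ip_def T_eq r by (simp add: sum_distrib_left sum_distrib_right algebra_simps if_distrib cong: if_cong)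
  also have "\<dots> = ?s * (\<Sum>y\<in>V. \<Sum>x\<in>V. if A y x then u y * cnj (v x) else 0)"
    by (subst sum.swap) (auto intro!: sum.cong dest: symA)
  also have "\<dots> = ip u (T v)"
    unfolding ip_def T_eq r by (simp add: sum_distrib_left sum_distrib_right algebra_simps if_distrib cong: if_cong)
  finally show ?thesis .
qed

fun Gop :: "real \<Rightarrow> nat \<Rightarrow> (nat \<Rightarrow> complex) \<Rightarrow> nat \<Rightarrow> complex" where
  "Gop c 0 f = (\<lambda>x. of_real c * Rs f x)"
| "Gop c (Suc 0) f = T f"
| "Gop c (Suc (Suc n)) f = (\<lambda>x. T (Gop c (Suc n) f) x - Gop c n f x)"

lemma Gop_out: "x \<notin> V \<Longrightarrow> Gop c n f x = 0"
proof (induction c n f rule: Gop.induct)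
  case (1 c f) then show ?case by (simp add: Rs_def)
next
  case (2 c f) then show ?case by (simp add: T_out)
next
  case (3 c n f) then show ?case by (simp add: T_out)
qed

lemma Rs_Gop: "Rs (Gop c n f) = Gop c n f" by (rule ext) (simp add: Rs_def Gop_out)

lemma Gop_local: "(\<And>x. x \<in> V \<Longrightarrow> f x = g x) \<Longrightarrow> Gop c n f = Gop c n g"
proof (induction c n f rule: Gop.induct)
  case (1 c f) then show ?case by (intro ext) (simp add: Rs_def)
next
  case (2 c f)
  have "T f = T g" by (rule T_local) (use 2 in blast)
  then show ?case by simp
next
  case (3 c n f)
  have e1: "Gop c (Suc n) f = Gop c (Suc n) g" using 3 by blast
  have e2: "Gop c n f = Gop c n g" using 3 by blast
  show ?case by (simp only: Gop.simps e1 e2)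
qed

lemma Gop_Rs: "Gop c n (Rs f) = Gop c n f" by (rule Gop_local) (simp add: Rs_def)

lemma Gop_diff: "Gop c n (\<lambda>x. f x - g x) = (\<lambda>x. Gop c n f x - Gop c n g x)"
proof (induction c n f rule: Gop.induct)
  case (1 c f) then show ?case by (intro ext) (simp add: Rs_def right_diff_distrib)
next
  case (2 c f) then show ?case by (simp add: T_diff)
next
  case (3 c n f)
  show ?case using 3 by (intro ext) (simp add: T_diff)
qed

lemma Gop_add: "Gop c n (\<lambda>x. f x + g x) = (\<lambda>x. Gop c n f x + Gop c n g x)"
proof (induction c n f rule: Gop.induct)
  case (1 c f) then show ?case by (intro ext) (simp add: Rs_def distrib_left)
next
  case (2 c f) then show ?case by (simp add: T_add)
next
  case (3 c n f)
  show ?case using 3 by (intro ext) (simp add: T_add)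
qed

lemma Gop_scale: "Gop c n (\<lambda>x. k * f x) = (\<lambda>x. k * Gop c n f x)"
proof (induction c n f rule: Gop.induct)
  case (1 c f) then show ?case by (intro ext) (simp add: Rs_def)
next
  case (2 c f) then show ?case by (simp add: T_scale)
next
  case (3 c n f)
  show ?case using 3 by (intro ext) (simp add: T_scale right_diff_distrib)
qed

lemma Gop_T: "Gop c n (T f) = T (Gop c n f)"
proof (induction c n f rule: Gop.induct)
  case (1 c f) then show ?case by (simp add: Rs_T T_scale T_Rs)
next
  case (2 c f) then show ?case by simp
next
  case (3 c n f) then show ?case by (simp add: T_diff)
qed

lemma Gop_sa: "ip (Gop c n u) v = ip u (Gop c n v)"
proof (induction c n u arbitrary: v rule: Gop.induct)
  case (1 c f) then show ?case by (simp add: ip_scale_left ip_scale_right ip_Rs_left ip_Rs_right)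
next
  case (2 c f) then show ?case by (simp add: T_sa)
next
  case (3 c n f)
  show ?case by (simp add: ip_diff_left ip_diff_right 3 T_sa Gop_T)
qed

abbreviation "Dop \<equiv> Gop 2"
abbreviation "Uop \<equiv> Gop 1"

lemma Dop_1: "T (Dop k f) = (\<lambda>x. Dop (Suc k) f x + Dop (absd k 1) f x)"
proof (cases k)
  case 0 then show ?thesis by (auto simp: absd_def T_scale T_Rs)
next
  case (Suc k') then show ?thesis by (auto simp: absd_def)
qed

lemma Dop_prod: "Dop a (Dop b f) = (\<lambda>x. Dop (a + b) f x + Dop (absd a b) f x)"
proof (induction b arbitrary: a rule: less_induct)
  case (less b)
  consider "b = 0" | "b = 1" | b' where "b = Suc (Suc b')" by (metis One_nat_def not0_implies_Suc)
  then show ?case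
  proof cases
    case 1 then show ?thesis by (auto simp: absd_def Gop_scale Gop_Rs)
  next
    case 2 then show ?thesis using Dop_1[of a f] by (simp add: Gop_T)
  next
    case 3
    have "Dop a (Dop b f) = (\<lambda>x. T (Dop a (Dop (Suc b') f)) x - Dop a (Dop b' f) x)"
      using 3 by (simp add: Gop_diff Gop_T)
    also have "\<dots> = (\<lambda>x. T (Dop (a + Suc b') f) x + T (Dop (absd a (Suc b')) f) x
          - Dop (a + b') f x - Dop (absd a b') f x)"
      using less.IH[of "Suc b'" a] less.IH[of b' a] 3 by (simp add: T_add diff_diff_eq)
    also have "\<dots> = (\<lambda>x. Dop (a + b) f x + Dop (a + b') f x
          + Dop (Suc (absd a (Suc b'))) f x + Dop (absd (absd a (Suc b')) 1) f x
          - Dop (a + b') f x - Dop (absd a b') f x)"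
    proof -
      have e1: "T (Dop (a + Suc b') f) = (\<lambda>x. Dop (a + b) f x + Dop (a + b') f x)"
        using Dop_1[of "a + Suc b'" f] 3 by (simp add: absd_def del: Gop.simps)
      have e2: "T (Dop (absd a (Suc b')) f) = (\<lambda>x. Dop (Suc (absd a (Suc b'))) f x + Dop (absd (absd a (Suc b')) 1) f x)"
        by (rule Dop_1)
      show ?thesis by (simp only: e1 e2) (simp add: algebra_simps del: Gop.simps)
    qed
    finally show ?thesis using absd_step[of a b'] 3 by (auto simp del: Gop.simps)
  qed
qed

lemma Dop_eigen:
  assumes ev: "\<And>x. x \<in> V \<Longrightarrow> T \<phi> x = \<mu> * \<phi> x"
  shows "x \<in> V \<Longrightarrow> Dop n \<phi> x = dval \<mu> n * \<phi> x"
proof (induction n arbitrary: x rule: less_induct)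
  case (less n)
  consider "n = 0" | "n = 1" | n' where "n = Suc (Suc n')" by (metis One_nat_def not0_implies_Suc)
  then show ?case
  proof cases
    case 1 then show ?thesis using less by (simp add: Rs_def)
  next
    case 2 then show ?thesis using less ev by simp
  next
    case 3
    have "T (Dop (Suc n') \<phi>) = T (\<lambda>x. dval \<mu> (Suc n') * \<phi> x)"
      by (rule T_local) (use less 3 in auto)
    also have "\<dots> = (\<lambda>x. dval \<mu> (Suc n') * T \<phi> x)" by (rule T_scale)
    finally have t: "T (Dop (Suc n') \<phi>) x = dval \<mu> (Suc n') * T \<phi> x" by simp
    have i0: "Dop n' \<phi> x = dval \<mu> n' * \<phi> x" using less.IH[of n' x] less.prems 3 by simp
    show ?thesis using t i0 ev[OF less.prems] 3 by (simp add: algebra_simps)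
  qed
qed

end



context rg begin

definition Sv :: "nat \<Rightarrow> (nat \<Rightarrow> complex) \<Rightarrow> nat \<Rightarrow> complex" where
  "Sv n f = Rs (S_op d A n f)"

lemma dpos: "real d > 0" using d1 by simp

lemma S_op_eq: "S_op d A n f x = of_real (real d powr (- real n / 2)) * Aw f x n"
  by (simp add: S_op_def Aw_def)

lemma Sv0: "Sv 0 f = Uop 0 f"
  using d1 by (intro ext) (simp add: Sv_def S_op_eq Aw_0 Rs_def)

lemma Sv1: "Sv 1 f = T f"
proof (rule ext)
  fix x
  have e: "real d powr (- real (Suc 0) / 2) = 1 / sqrt (real d)"
    using dpos by (simp add: powr_minus_divide powr_half_sqrt)
  show "Sv 1 f x = T f x"
  proof (cases "x \<in> V")
    case True
    have "Sv 1 f x = of_real (real d powr (- real (1::nat) / 2)) * Aw f x 1"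
      using True by (simp only: Sv_def Rs_def S_op_eq if_True)
    also have "\<dots> = T f x" unfolding One_nat_def e T_eq Aw_1 ..
    finally show ?thesis .
  qed (simp add: Sv_def Rs_def T_out)
qed

lemma T_div: "T (\<lambda>x. f x / c) = (\<lambda>x. T f x / c)"
  by (rule ext) (simp add: T_eq sum_divide_distrib mult.commute)

lemma T_Sv: "T (Sv (Suc n) f) = (\<lambda>x. Sv (Suc (Suc n)) f x + of_real (if n = 0 then (real d + 1) / real d else 1) * Sv n f x)"
proof (rule ext)
  fix x
  show "T (Sv (Suc n) f) x = Sv (Suc (Suc n)) f x + of_real (if n = 0 then (real d + 1) / real d else 1) * Sv n f x"
  proof (cases "x \<in> V")
    case False then show ?thesis by (simp add: T_out Sv_def Rs_def)
  next
    case True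
    let ?r = "real d"
    have nb: "(\<Sum>y\<in>{y. A x y}. Sv (Suc n) f y) = (\<Sum>y\<in>{y. A x y}. of_real (?r powr (- real (Suc n) / 2)) * Aw f y (Suc n))"
      by (rule sum.cong) (auto simp: Sv_def Rs_def S_op_eq dest: adjV)
    have k1: "1 / sqrt ?r * ?r powr (- real (Suc n) / 2) = ?r powr (- real (Suc (Suc n)) / 2)"
    proof -
      have a: "1 / sqrt ?r = ?r powr (- 1 / 2)" using dpos by (simp add: powr_minus_divide powr_half_sqrt)
      have b: "?r powr (-1/2) * ?r powr (-real (Suc n)/2) = ?r powr (-1/2 + -real (Suc n)/2)"
        by (rule powr_add[symmetric])
      have c: "-1/2 + -real (Suc n)/2 = - real (Suc (Suc n))/2" by (simp add: field_simps)
      show ?thesis by (simp only: a b c)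
    qed
    have k2: "?r powr (- real (Suc (Suc n)) / 2) * real (if n = 0 then d + 1 else d)
       = (if n = 0 then (?r + 1) / ?r else 1) * ?r powr (- real n / 2)"
    proof -
      have c: "- real (Suc (Suc n)) / 2 = - real n / 2 + (-1)" by (simp add: field_simps)
      have "?r powr (- real (Suc (Suc n)) / 2) = ?r powr (- real n / 2) * ?r powr (-1)"
        unfolding c by (rule powr_add)
      also have "\<dots> = ?r powr (- real n / 2) / ?r" using dpos by (simp add: powr_minus_divide)
      finally show ?thesis using dpos by (auto simp: field_simps)
    qed
    have "T (Sv (Suc n) f) x = of_real (1 / sqrt ?r) * of_real (?r powr (- real (Suc n) / 2))
         * (\<Sum>y\<in>{y. A x y}. Aw f y (Suc n))"
      unfolding T_eq nb by (simp add: sum_distrib_left mult.assoc)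
    also have "\<dots> = of_real (?r powr (- real (Suc (Suc n)) / 2))
         * (Aw f x (Suc (Suc n)) + of_nat (if n = 0 then d + 1 else d) * Aw f x n)"
    proof -
      have k1c: "(of_real (1 / sqrt ?r) :: complex) * of_real (?r powr (- real (Suc n) / 2)) = of_real (?r powr (- real (Suc (Suc n)) / 2))"
        by (simp only: of_real_mult[symmetric] k1)
      show ?thesis by (simp only: k1c Aw_rec[OF True])
    qed
    also have "\<dots> = of_real (?r powr (- real (Suc (Suc n)) / 2)) * Aw f x (Suc (Suc n))
        + of_real (?r powr (- real (Suc (Suc n)) / 2) * real (if n = 0 then d + 1 else d)) * Aw f x n"
      by (simp add: algebra_simps)
    also have "\<dots> = Sv (Suc (Suc n)) f x + of_real (if n = 0 then (real d + 1) / real d else 1) * Sv n f x"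
      unfolding k2 using True by (simp add: Sv_def Rs_def S_op_eq)
    finally show ?thesis .
  qed
qed

lemma Sv_rec: "Sv (Suc (Suc n)) f = (\<lambda>x. T (Sv (Suc n) f) x - of_real (if n = 0 then (real d + 1) / real d else 1) * Sv n f x)"
  by (simp add: T_Sv)

lemma Sv_U: "Sv (Suc (Suc n)) f = (\<lambda>x. Uop (Suc (Suc n)) f x - Uop n f x / of_nat d)"
proof (induction n rule: less_induct)
  case (less n)
  have dn: "(of_nat d :: complex) \<noteq> 0" using d1 by simp
  consider "n = 0" | "n = 1" | n' where "n = Suc (Suc n')" by (metis One_nat_def not0_implies_Suc)
  then show ?case
  proof cases
    case 1
    show ?thesis unfolding 1 Sv_rec Sv1[unfolded One_nat_def] Sv0
      using dn by (intro ext) (simp add: field_simps of_real_divide)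
  next
    case 2
    have "Sv (Suc (Suc 0)) f = (\<lambda>x. Uop (Suc (Suc 0)) f x - Uop 0 f x / of_nat d)"
      using less[of 0] 2 by simp
    then show ?thesis unfolding 2 Sv_rec[of 1] using Sv1[unfolded One_nat_def]
      by (intro ext) (simp add: T_diff T_div T_scale T_Rs)
  next
    case 3
    have i1: "Sv (Suc (Suc (Suc n'))) f = (\<lambda>x. Uop (Suc (Suc (Suc n'))) f x - Uop (Suc n') f x / of_nat d)"
      using less[of "Suc n'"] 3 by simp
    have i0: "Sv (Suc (Suc n')) f = (\<lambda>x. Uop (Suc (Suc n')) f x - Uop n' f x / of_nat d)"
      using less[of n'] 3 by simp
    show ?thesis unfolding 3 Sv_rec[of "Suc (Suc n')"] i1 i0
      by (intro ext) (simp add: T_diff T_div diff_divide_distrib)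
  qed
qed

lemma D_U: "Dop (Suc (Suc n)) f = (\<lambda>x. Uop (Suc (Suc n)) f x - Uop n f x)"
proof (induction n rule: less_induct)
  case (less n)
  consider "n = 0" | "n = 1" | n' where "n = Suc (Suc n')" by (metis One_nat_def not0_implies_Suc)
  then show ?case
  proof cases
    case 1 then show ?thesis by (intro ext) (simp add: T_scale T_Rs)
  next
    case 2 then show ?thesis by (intro ext) (simp add: T_scale T_Rs T_diff)
  next
    case 3
    have i1: "Dop (Suc (Suc (Suc n'))) f = (\<lambda>x. Uop (Suc (Suc (Suc n'))) f x - Uop (Suc n') f x)"
      using less[of "Suc n'"] 3 by simp
    have i0: "Dop (Suc (Suc n')) f = (\<lambda>x. Uop (Suc (Suc n')) f x - Uop n' f x)"
      using less[of n'] 3 by simp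
    have "Dop (Suc (Suc n)) f = (\<lambda>x. T (Dop (Suc (Suc (Suc n'))) f) x - Dop (Suc (Suc n')) f x)"
      using 3 by (simp del: Gop.simps) (simp only: Gop.simps)
    also have "\<dots> = (\<lambda>x. Uop (Suc (Suc n)) f x - Uop n f x)"
      unfolding i1 i0 3 by (intro ext) (simp add: T_diff T_scale)
    finally show ?thesis .
  qed
qed

end



lemma sq_bound: fixes z :: complex shows "(cmod z)^2 + (cmod (z*z - 2))^2 \<ge> 7/4"
proof -
  let ?u = "(cmod z)^2"
  have t: "cmod (z*z - 2) \<ge> 2 - ?u"
  proof -
    have "cmod (2::complex) \<le> cmod (z*z) + cmod (2 - z*z)" by (rule norm_triangle_sub)
    moreover have "cmod (2 - z*z) = cmod (z*z - 2)" by (rule norm_minus_commute)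
    ultimately show ?thesis by (simp add: norm_mult power2_eq_square)
  qed
  show ?thesis
  proof (cases "?u \<le> 2")
    case True
    then have "(2 - ?u)^2 \<le> (cmod (z*z - 2))^2" using t by (intro power_mono) auto
    moreover have "?u + (2 - ?u)^2 - 7/4 = (?u - 3/2)^2" by (simp add: power2_eq_square algebra_simps)
    moreover have "(?u - 3/2)^2 \<ge> 0" by simp
    ultimately show ?thesis by linarith
  next
    case False
    have "(cmod (z*z - 2))^2 \<ge> 0" by simp
    then show ?thesis using False by linarith
  qed
qed

context rg begin

definition nrm :: "(nat \<Rightarrow> complex) \<Rightarrow> real" where "nrm u = (\<Sum>x\<in>V. (cmod (u x))^2)"

lemma ip_self: "ip u u = of_real (nrm u)"
  unfolding ip_def nrm_def of_real_sum by (rule sum.cong[OF refl]) (rule complex_norm_square[symmetric])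

lemma nrm_nonneg: "nrm u \<ge> 0" by (simp add: nrm_def sum_nonneg)

lemma ip_CS: "(cmod (ip u v))^2 \<le> nrm u * nrm v"
proof -
  have "cmod (ip u v) \<le> (\<Sum>x\<in>V. cmod (u x) * cmod (v x))"
    unfolding ip_def by (rule order_trans[OF norm_sum]) (simp add: norm_mult)
  then have "(cmod (ip u v))^2 \<le> (\<Sum>x\<in>V. cmod (u x) * cmod (v x))^2"
    by (intro power_mono) auto
  also have "\<dots> \<le> nrm u * nrm v" unfolding nrm_def by (rule Cauchy_Schwarz_ineq_sum)
  finally show ?thesis .
qed

lemma ip_div_left: "ip (\<lambda>x. u x / c) v = ip u v / c"
  by (simp add: ip_def sum_divide_distrib)

lemma ip_sum_left: "ip (\<lambda>x. \<Sum>k\<in>K. c k * F k x) v = (\<Sum>k\<in>K. c k * ip (F k) v)"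
  unfolding ip_def by (simp add: sum_distrib_right sum_distrib_left mult.assoc) (rule sum.swap)

lemma ip_sum_right: "ip u (\<lambda>x. \<Sum>k\<in>K. c k * F k x) = (\<Sum>k\<in>K. cnj (c k) * ip u (F k))"
  unfolding ip_def by (simp add: sum_distrib_right sum_distrib_left mult.assoc mult.left_commute) (rule sum.swap)

lemma U_bound:
  assumes B: "B \<ge> 0" and rho: "\<rho> > 0" and rd: "1 / real d \<le> \<rho>^2"
    and S: "\<And>j. j \<le> N \<Longrightarrow> cmod (ip (Sv j g) g) \<le> B * \<rho>^j"
  shows "n \<le> N \<Longrightarrow> cmod (ip (Uop n g) g) \<le> (n + 1) * B * \<rho>^n"
proof (induction n rule: less_induct)
  case (less n)
  consider "n = 0" | "n = 1" | n' where "n = Suc (Suc n')" by (metis One_nat_def not0_implies_Suc)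
  then show ?case
  proof cases
    case 1 then show ?thesis using S[of 0] less.prems by (simp add: Sv0)
  next
    case 2
    have "0 \<le> B * \<rho>" using B rho by simp
    then show ?thesis using S[of 1] less.prems Sv1 2 by simp
  next
    case 3
    have ih: "cmod (ip (Uop n' g) g) \<le> (n' + 1) * B * \<rho>^n'" using less.IH[of n'] less.prems 3 by (simp add: add.commute)
    have eq: "Uop n g = (\<lambda>x. Sv n g x + Uop n' g x / of_nat d)"
      unfolding 3 Sv_U by (rule ext) (simp del: Gop.simps)
    have "cmod (ip (Uop n g) g) \<le> cmod (ip (Sv n g) g) + cmod (ip (Uop n' g) g) / real d"
      unfolding eq ip_add_left ip_div_left by (rule order_trans[OF norm_triangle_ineq]) (simp add: norm_divide)
    also have "\<dots> \<le> B * \<rho>^n + (n' + 1) * B * \<rho>^n' * (1 / real d)"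
      using S[of n] less.prems ih dpos by (intro add_mono) (auto simp: divide_right_mono)
    also have "(n' + 1) * B * \<rho>^n' * (1 / real d) \<le> (n' + 1) * B * \<rho>^n' * \<rho>^2"
      using rd B rho by (intro mult_left_mono) auto
    also have "(n' + 1) * B * \<rho>^n' * \<rho>^2 = (n' + 1) * B * \<rho>^n" using 3 by (simp add: power_add[symmetric])
    finally have f0: "cmod (ip (Uop n g) g) \<le> (real n' + 2) * (B * \<rho>^n)" by (simp add: algebra_simps)
    moreover have "(real n' + 2) * (B * \<rho>^n) \<le> (real n + 1) * (B * \<rho>^n)" using 3 B rho by (intro mult_right_mono) auto
    ultimately show ?thesis by (simp add: mult.assoc)
  qed
qed

lemma D_bound:
  assumes B: "B \<ge> 0" and rho: "\<rho> > 0" and rd: "1 / real d \<le> \<rho>^2"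
    and S: "\<And>j. j \<le> N \<Longrightarrow> cmod (ip (Sv j g) g) \<le> B * \<rho>^j"
    and n: "1 \<le> n" "n \<le> N"
  shows "cmod (ip (Dop n g) g) \<le> (real d + 1) * (n + 1) * B * \<rho>^n"
proof -
  have U: "\<And>k. k \<le> N \<Longrightarrow> cmod (ip (Uop k g) g) \<le> (k + 1) * B * \<rho>^k"
    using U_bound[of B \<rho> N g] B rho rd S by blast
  consider "n = 1" | n' where "n = Suc (Suc n')" using n by (metis One_nat_def not0_implies_Suc not_one_le_zero)
  then show ?thesis
  proof cases
    case 1
    have "cmod (ip (Dop n g) g) = cmod (ip (Uop 1 g) g)" using 1 by simp
    also have "\<dots> \<le> (1 + 1) * B * \<rho>^1" using U[of 1] n by simp
    also have "\<dots> = 1 * (2 * B * \<rho>)" by simp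
    also have "\<dots> \<le> (real d + 1) * (2 * B * \<rho>)" by (rule mult_right_mono) (use B rho in auto)
    also have "\<dots> = (real d + 1) * (n + 1) * B * \<rho>^n" using 1 by simp
    finally show ?thesis .
  next
    case 2
    have "cmod (ip (Dop n g) g) = cmod (ip (Uop n g) g - ip (Uop n' g) g)"
      unfolding 2 D_U ip_diff_left ..
    also have "\<dots> \<le> cmod (ip (Uop n g) g) + cmod (ip (Uop n' g) g)" by (rule norm_triangle_ineq4)
    also have "\<dots> \<le> (n + 1) * B * \<rho>^n + (n' + 1) * B * \<rho>^n'" proof (rule add_mono)
      show "cmod (ip (Uop n g) g) \<le> (n + 1) * B * \<rho>^n" using U[of n] n by (simp add: add.commute)
      show "cmod (ip (Uop n' g) g) \<le> (n' + 1) * B * \<rho>^n'" using U[of n'] n 2 by (simp add: add.commute)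
    qed
    also have "(n' + 1) * B * \<rho>^n' \<le> (n + 1) * B * (real d * \<rho>^n)"
    proof -
      have "\<rho>^n' \<le> real d * \<rho>^n"
      proof -
        have "1 \<le> real d * \<rho>^2" using rd dpos by (simp add: field_simps)
        then have "\<rho>^n' * 1 \<le> \<rho>^n' * (real d * \<rho>^2)" using rho by (intro mult_left_mono) auto
        then show ?thesis using 2 by (simp add: power_add[symmetric] algebra_simps)
      qed
      then show ?thesis using 2 B rho by (intro mult_mono) auto
    qed
    finally show ?thesis by (simp add: algebra_simps)
  qed
qed

end



lemma absd_mult: "absd (l * n0) (k * n0) = absd l k * n0"
  unfolding absd_def by (auto simp: diff_mult_distrib)

lemma absd_ge: "k \<noteq> l \<Longrightarrow> 1 \<le> absd l k" unfolding absd_def by auto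
lemma absd_le: "absd l k \<le> l + k" unfolding absd_def by auto

context rg begin

lemma Q_lower:
  fixes e :: "nat \<Rightarrow> complex"
  assumes e2: "\<And>k. e (2 * k) = e k * e k - 2"
  shows "7 * real m / 8 \<le> (\<Sum>k\<in>{1..2*m}. (cmod (e k))^2)"
proof -
  let ?Q = "(\<Sum>k\<in>{1..2*m}. (cmod (e k))^2)"
  have "7 * real m / 4 = (\<Sum>k\<in>{1..m}. 7/4)" by simp
  also have "\<dots> \<le> (\<Sum>k\<in>{1..m}. (cmod (e k))^2 + (cmod (e (2*k)))^2)"
    by (rule sum_mono) (simp only: e2 sq_bound)
  also have "\<dots> = (\<Sum>k\<in>{1..m}. (cmod (e k))^2) + (\<Sum>k\<in>{1..m}. (cmod (e (2*k)))^2)"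
    by (rule sum.distrib)
  also have "(\<Sum>k\<in>{1..m}. (cmod (e k))^2) \<le> ?Q"
    by (rule sum_mono2) auto
  also have "(\<Sum>k\<in>{1..m}. (cmod (e (2*k)))^2) = (\<Sum>j\<in>(\<lambda>k. 2*k) ` {1..m}. (cmod (e j))^2)"
    by (subst sum.reindex) (auto simp: inj_on_def)
  also have "\<dots> \<le> ?Q" by (rule sum_mono2) auto
  finally show ?thesis by simp
qed

lemma core:
  assumes ev: "\<And>x. x \<in> V \<Longrightarrow> T \<phi> x = \<mu> * \<phi> x"
    and n\<phi>: "nrm \<phi> = 1"
    and g\<phi>: "ip g \<phi> = of_real a" and gg: "nrm g = a" and a0: "0 \<le> a" and a1: "a \<le> 1"
    and m1: "1 \<le> m" and n01: "1 \<le> n0"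
    and small: "\<And>n. n0 \<le> n \<Longrightarrow> n \<le> 4*m*n0 \<Longrightarrow> cmod (ip (Dop n g) g) \<le> 1 / (2 * real m)"
  shows "7 * real m * a^2 \<le> 32"
proof -
  define K where "K = {1..2*m}"
  define e where "e k = dval \<mu> (k*n0)" for k
  define Q where "Q = (\<Sum>k\<in>K. (cmod (e k))^2)"
  define P where "P = (\<lambda>x. \<Sum>k\<in>K. e k * Dop (k*n0) g x)"
  have finK: "finite K" by (simp add: K_def)
  have Q0: "Q \<ge> 0" by (simp add: Q_def sum_nonneg)
  have e2: "e (2*k) = e k * e k - 2" for k
    using dval_prod[of \<mu> "k*n0" "k*n0"] by (simp add: e_def absd_def mult_2 add_mult_distrib)
  have Qm: "7 * real m / 8 \<le> Q" unfolding Q_def K_def by (rule Q_lower) (rule e2)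
  have Qpos: "Q > 0" using Qm m1 by linarith
  have L1: "ip P \<phi> = of_real (Q * a)"
  proof -
    have "ip P \<phi> = (\<Sum>k\<in>K. e k * ip (Dop (k*n0) g) \<phi>)" unfolding P_def by (rule ip_sum_left)
    also have "\<dots> = (\<Sum>k\<in>K. e k * (cnj (e k) * of_real a))"
    proof (rule sum.cong[OF refl])
      fix k
      have "ip (Dop (k*n0) g) \<phi> = ip g (Dop (k*n0) \<phi>)" by (rule Gop_sa)
      also have "\<dots> = ip g (\<lambda>x. e k * \<phi> x)"
        by (rule ip_local_right) (simp add: e_def Dop_eigen[OF ev])
      also have "\<dots> = cnj (e k) * of_real a" by (simp add: ip_scale_right g\<phi>)
      finally show "e k * ip (Dop (k*n0) g) \<phi> = e k * (cnj (e k) * of_real a)" by simp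
    qed
    also have "\<dots> = (\<Sum>k\<in>K. of_real ((cmod (e k))^2) * of_real a)"
      by (rule sum.cong[OF refl]) (simp only: complex_norm_square mult.assoc)
    also have "\<dots> = of_real (Q * a)" by (simp add: Q_def of_real_sum sum_distrib_right)
    finally show ?thesis .
  qed
  have L2: "(Q * a)^2 \<le> nrm P"
  proof -
    have "(cmod (ip P \<phi>))^2 \<le> nrm P * nrm \<phi>" by (rule ip_CS)
    moreover have "cmod (ip P \<phi>) = Q * a" unfolding L1 using Q0 a0 by (simp only: norm_of_real abs_of_nonneg mult_nonneg_nonneg)
    ultimately show ?thesis using n\<phi> by simp
  qed
  have pair: "cmod (ip (Dop (k*n0) g) (Dop (l*n0) g)) \<le> 1 / real m + (if k = l then 2 else 0)"
    if k: "k \<in> K" and l: "l \<in> K" for k l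
  proof -
    have "ip (Dop (k*n0) g) (Dop (l*n0) g) = ip (Dop (l*n0) (Dop (k*n0) g)) g"
      by (rule Gop_sa[symmetric])
    also have "\<dots> = ip (Dop (l*n0 + k*n0) g) g + ip (Dop (absd (l*n0) (k*n0)) g) g"
      unfolding Dop_prod ip_add_left ..
    finally have eq: "ip (Dop (k*n0) g) (Dop (l*n0) g) = ip (Dop (l*n0 + k*n0) g) g + ip (Dop (absd (l*n0) (k*n0)) g) g" .
    have kl: "1 \<le> k" "k \<le> 2*m" "1 \<le> l" "l \<le> 2*m" using k l by (auto simp: K_def)
    have s1: "cmod (ip (Dop (l*n0 + k*n0) g) g) \<le> 1 / (2 * real m)"
    proof (rule small)
      show "n0 \<le> l*n0 + k*n0" using kl by (simp add: trans_le_add1)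
      have "l*n0 + k*n0 = (l + k) * n0" by (simp add: add_mult_distrib)
      also have "\<dots> \<le> (4*m) * n0" using kl by (intro mult_right_mono) auto
      finally show "l*n0 + k*n0 \<le> 4*m*n0" by simp
    qed
    have s2: "cmod (ip (Dop (absd (l*n0) (k*n0)) g) g) \<le> 1 / (2 * real m) + (if k = l then 2 else 0)"
    proof (cases "k = l")
      case True
      have "ip (Dop (absd (l*n0) (k*n0)) g) g = 2 * ip g g"
        using True by (simp add: absd_def ip_scale_left ip_Rs_left)
      also have "\<dots> = of_real (2 * a)" by (simp add: ip_self gg)
      finally have "cmod (ip (Dop (absd (l*n0) (k*n0)) g) g) = 2 * a" using a0 by simp
      moreover have "0 \<le> 1 / (2 * real m)" by simp
      moreover have "(if k = l then 2 else 0) = (2::real)" using True by simp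
      ultimately show ?thesis using a1 by linarith
    next
      case False
      have "cmod (ip (Dop (absd (l*n0) (k*n0)) g) g) \<le> 1 / (2 * real m)"
      proof (rule small)
        have "1 * n0 \<le> absd l k * n0" using absd_ge[OF False] by (intro mult_right_mono) auto
        then show "n0 \<le> absd (l*n0) (k*n0)" by (simp add: absd_mult)
        have "absd l k * n0 \<le> (l + k) * n0" using absd_le by (intro mult_right_mono) auto
        also have "\<dots> \<le> (4*m) * n0" using kl by (intro mult_right_mono) auto
        finally show "absd (l*n0) (k*n0) \<le> 4*m*n0" by (simp add: absd_mult)
      qed
      then show ?thesis using False by simp
    qed
    have "cmod (ip (Dop (k*n0) g) (Dop (l*n0) g)) \<le> cmod (ip (Dop (l*n0 + k*n0) g) g) + cmod (ip (Dop (absd (l*n0) (k*n0)) g) g)"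
      unfolding eq by (rule norm_triangle_ineq)
    also have "\<dots> \<le> 1 / (2 * real m) + (1 / (2 * real m) + (if k = l then 2 else 0))"
      using s1 s2 by (rule add_mono)
    also have "\<dots> = 1 / real m + (if k = l then 2 else 0)" by (simp add: field_simps)
    finally show ?thesis .
  qed
  have L3: "ip P P = (\<Sum>k\<in>K. \<Sum>l\<in>K. e k * cnj (e l) * ip (Dop (k*n0) g) (Dop (l*n0) g))"
  proof -
    have "ip P P = (\<Sum>k\<in>K. e k * ip (Dop (k*n0) g) P)" unfolding P_def by (rule ip_sum_left)
    also have "\<dots> = (\<Sum>k\<in>K. e k * (\<Sum>l\<in>K. cnj (e l) * ip (Dop (k*n0) g) (Dop (l*n0) g)))"
      unfolding P_def by (subst ip_sum_right) (rule refl)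
    also have "\<dots> = (\<Sum>k\<in>K. \<Sum>l\<in>K. e k * cnj (e l) * ip (Dop (k*n0) g) (Dop (l*n0) g))"
      by (simp add: sum_distrib_left mult.assoc)
    finally show ?thesis .
  qed
  have L5: "nrm P \<le> 4 * Q"
  proof -
    have "nrm P = cmod (ip P P)" using nrm_nonneg[of P] by (simp add: ip_self)
    also have "\<dots> \<le> (\<Sum>k\<in>K. \<Sum>l\<in>K. cmod (e k) * cmod (e l) * (1 / real m + (if k = l then 2 else 0)))"
      unfolding L3
      apply (rule order_trans[OF norm_sum], rule sum_mono)
      apply (rule order_trans[OF norm_sum], rule sum_mono)
      apply (simp only: norm_mult complex_mod_cnj)
      apply (rule mult_left_mono)
       apply (rule pair, assumption, assumption)
      by simp
    also have "\<dots> = (\<Sum>k\<in>K. \<Sum>l\<in>K. cmod (e k) * cmod (e l)) / real m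
        + 2 * (\<Sum>k\<in>K. (cmod (e k))^2)"
    proof -
      have "(\<Sum>k\<in>K. \<Sum>l\<in>K. cmod (e k) * cmod (e l) * (1 / real m + (if k = l then 2 else 0)))
        = (\<Sum>k\<in>K. \<Sum>l\<in>K. cmod (e k) * cmod (e l) / real m + (if k = l then 2 * (cmod (e k))^2 else 0))"
        by (intro sum.cong refl) (auto simp: field_simps power2_eq_square)
      also have "\<dots> = (\<Sum>k\<in>K. \<Sum>l\<in>K. cmod (e k) * cmod (e l)) / real m + 2 * (\<Sum>k\<in>K. (cmod (e k))^2)"
        by (simp add: sum.distrib sum_divide_distrib sum.delta[OF finK] sum.delta'[OF finK] sum_distrib_left)
      finally show ?thesis .
    qed
    also have "(\<Sum>k\<in>K. \<Sum>l\<in>K. cmod (e k) * cmod (e l)) = (\<Sum>k\<in>K. cmod (e k))^2"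
      by (simp add: power2_eq_square sum_product)
    also have "\<dots> = (\<Sum>k\<in>K. cmod (e k) * 1)^2" by simp
    also have "\<dots> \<le> (\<Sum>k\<in>K. (cmod (e k))^2) * (\<Sum>k\<in>K. 1^2)" by (rule Cauchy_Schwarz_ineq_sum)
    also have "\<dots> = Q * (2 * real m)" by (simp add: Q_def K_def)
    finally show ?thesis using m1 by (simp add: Q_def field_simps)
  qed
  have "Q * (Q * a^2) \<le> Q * 4" using L2 L5 by (simp add: power2_eq_square algebra_simps)
  then have "Q * a^2 \<le> 4" using Qpos by simp
  moreover have "7 * real m / 8 * a^2 \<le> Q * a^2" using Qm by (intro mult_right_mono) auto
  ultimately show ?thesis by simp
qed

end



lemma sum_powr_zero:
  fixes a :: "'i \<Rightarrow> real"
  assumes "finite I" "r > 0" "\<And>i. i \<in> I \<Longrightarrow> a i \<ge> 0" "(\<Sum>i\<in>I. a i powr r) = 0" "i \<in> I"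
  shows "a i = 0"
proof -
  have "\<forall>i\<in>I. a i powr r = 0" using assms(1,4) sum_nonneg_eq_0_iff[of I "\<lambda>i. a i powr r"] by simp
  then show ?thesis using assms(5) by simp
qed

lemma holder_sum:
  fixes a b :: "'i \<Rightarrow> real"
  assumes fin: "finite I" and r: "r > 1" and s: "s > 1" and rs: "1/r + 1/s = 1"
    and a: "\<And>i. i \<in> I \<Longrightarrow> a i \<ge> 0" and b: "\<And>i. i \<in> I \<Longrightarrow> b i \<ge> 0"
  shows "(\<Sum>i\<in>I. a i * b i) \<le> (\<Sum>i\<in>I. a i powr r) powr (1/r) * (\<Sum>i\<in>I. b i powr s) powr (1/s)"
proof -
  define SA where "SA = (\<Sum>i\<in>I. a i powr r)"
  define SB where "SB = (\<Sum>i\<in>I. b i powr s)"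
  define AA where "AA = SA powr (1/r)"
  define BB where "BB = SB powr (1/s)"
  have SA0: "SA \<ge> 0" unfolding SA_def by (simp add: sum_nonneg)
  have SB0: "SB \<ge> 0" unfolding SB_def by (simp add: sum_nonneg)
  show ?thesis
  proof (cases "SA = 0 \<or> SB = 0")
    case True
    then have "(\<Sum>i\<in>I. a i * b i) = 0"
    proof
      assume z: "SA = 0"
      have "a i = 0" if "i \<in> I" for i
        by (rule sum_powr_zero[where I=I and r=r and a=a]) (use fin a r z that in \<open>auto simp: SA_def\<close>)
      then show ?thesis by simp
    next
      assume z: "SB = 0"
      have "b i = 0" if "i \<in> I" for i
        by (rule sum_powr_zero[where I=I and r=s and a=b]) (use fin b s z that in \<open>auto simp: SB_def\<close>)
      then show ?thesis by simp
    qed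
    then show ?thesis by simp
  next
    case False
    then have SAp: "SA > 0" and SBp: "SB > 0" using SA0 SB0 by auto
    have AAp: "AA > 0" and BBp: "BB > 0" unfolding AA_def BB_def using SAp SBp by auto
    have AAr: "AA powr r = SA" unfolding AA_def using r SA0 by (simp add: powr_powr powr_one)
    have BBs: "BB powr s = SB" unfolding BB_def using s SB0 by (simp add: powr_powr powr_one)
    have "(\<Sum>i\<in>I. (a i / AA) * (b i / BB)) \<le> (\<Sum>i\<in>I. (a i / AA) powr r / r + (b i / BB) powr s / s)"
      by (rule sum_mono, rule Youngs_inequality) (use r s rs a b AAp BBp in auto)
    also have "\<dots> = (\<Sum>i\<in>I. a i powr r) / SA / r + (\<Sum>i\<in>I. b i powr s) / SB / s"
      by (simp add: powr_divide AAr BBs sum.distrib sum_divide_distrib)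
    also have "\<dots> = 1" using SAp SBp rs by (simp add: SA_def[symmetric] SB_def[symmetric])
    finally have "(\<Sum>i\<in>I. a i * b i) / (AA * BB) \<le> 1"
      by (simp add: sum_divide_distrib field_simps)
    then show ?thesis using AAp BBp by (simp add: AA_def BB_def SA_def SB_def field_simps)
  qed
qed

definition conjpq :: "real \<Rightarrow> ereal \<Rightarrow> bool" where
  "conjpq p q \<longleftrightarrow> (q = \<infinity> \<and> p = 1) \<or> (\<exists>q'. q = ereal q' \<and> q' > 1 \<and> p > 1 \<and> 1/p + 1/q' = 1)"

definition goodq :: "ereal \<Rightarrow> bool" where
  "goodq q \<longleftrightarrow> q = \<infinity> \<or> (\<exists>q'. q = ereal q' \<and> q' \<ge> 1)"

lemma conjpq_good: "conjpq p q \<Longrightarrow> goodq q \<and> goodq (ereal p)"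
  unfolding conjpq_def goodq_def by auto

lemma conjpq_intro:
  assumes "1 \<le> p" "2 < q" "1 / ereal p + 1 / q = 1"
  shows "conjpq p q"
proof (cases q)
  case (real q')
  have "1 / ereal p = ereal (1/p)" using assms(1) by (simp add: one_ereal_def)
  moreover have "1 / ereal q' = ereal (1/q')" using assms(2) real by (simp add: one_ereal_def)
  ultimately have e: "1/p + 1/q' = 1" using assms(3) real by simp
  have q2: "q' > 2" using assms(2) real by simp
  then have "1/q' > 0" by simp
  then have "1/p < 1" using e by linarith
  then have "p > 1" using assms(1) by (simp add: field_simps)
  then show ?thesis unfolding conjpq_def using real q2 e by auto
next
  case PInf
  then have "1 / ereal p = 1" using assms(3) by simp
  then have "p = 1" using assms(1) by (simp add: one_ereal_def)
  then show ?thesis unfolding conjpq_def using PInf by auto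
next
  case MInf then show ?thesis using assms(2) by simp
qed

lemma lpn_fin: "lp_norm V (ereal p) f = (\<Sum>x\<in>V. cmod (f x) powr p) powr (1/p)"
  by (simp add: lp_norm_def)

lemma lpn_inf: "lp_norm V \<infinity> f = Max (insert 0 ((\<lambda>x. cmod (f x)) ` V))"
  by (simp add: lp_norm_def)

lemma lpn_nonneg: "finite V \<Longrightarrow> goodq q \<Longrightarrow> lp_norm V q f \<ge> 0"
  unfolding goodq_def by (auto simp: lpn_fin lpn_inf intro: Max_ge)

lemma lpn_point:
  assumes "finite V" "x \<in> V" "goodq q"
  shows "cmod (f x) \<le> lp_norm V q f"
  using assms(3) unfolding goodq_def
proof
  assume "q = \<infinity>" then show ?thesis using assms by (simp add: lpn_inf)
next
  assume "\<exists>q'. q = ereal q' \<and> q' \<ge> 1"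
  then obtain q' where q: "q = ereal q'" "q' \<ge> 1" by blast
  have "cmod (f x) = (cmod (f x) powr q') powr (1/q')" using q by (simp add: powr_powr)
  also have "\<dots> \<le> (\<Sum>y\<in>V. cmod (f y) powr q') powr (1/q')"
    by (rule powr_mono2) (use q assms in \<open>auto intro!: member_le_sum\<close>)
  finally show ?thesis using q by (simp add: lpn_fin)
qed

lemma lpn_scale:
  assumes "finite V" "goodq q" "k \<ge> 0"
  shows "lp_norm V q (\<lambda>x. of_real k * f x) = k * lp_norm V q f"
  using assms(2) unfolding goodq_def
proof
  assume qi: "q = \<infinity>"
  show ?thesis
  proof (cases "V = {}")
    case True then show ?thesis using qi by (simp add: lpn_inf)
  next
    case False
    have m: "mono (\<lambda>t::real. k * t)" using assms(3) by (simp add: mono_def mult_left_mono)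
    have "k * Max (insert 0 ((\<lambda>x. cmod (f x)) ` V)) = Max ((\<lambda>t. k * t) ` insert 0 ((\<lambda>x. cmod (f x)) ` V))"
      by (rule mono_Max_commute[OF m]) (use assms in auto)
    also have "(\<lambda>t. k * t) ` insert 0 ((\<lambda>x. cmod (f x)) ` V) = insert 0 ((\<lambda>x. cmod (of_real k * f x)) ` V)"
      using assms(3) by (auto simp: image_image norm_mult)
    finally show ?thesis using qi by (simp add: lpn_inf)
  qed
next
  assume "\<exists>q'. q = ereal q' \<and> q' \<ge> 1"
  then obtain q' where q: "q = ereal q'" "q' \<ge> 1" by blast
  have "(\<Sum>x\<in>V. cmod (of_real k * f x) powr q') = k powr q' * (\<Sum>x\<in>V. cmod (f x) powr q')"
    using assms(3) by (simp add: norm_mult powr_mult sum_distrib_left)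
  then have "lp_norm V q (\<lambda>x. of_real k * f x) = (k powr q') powr (1/q') * (\<Sum>x\<in>V. cmod (f x) powr q') powr (1/q')"
    using q by (simp add: lpn_fin powr_mult)
  also have "(k powr q') powr (1/q') = k" using q assms(3) by (simp add: powr_powr)
  finally show ?thesis using q by (simp add: lpn_fin)
qed

lemma lpn_bound:
  assumes "finite V" "goodq q" "K \<ge> 0" "\<And>x. x \<in> V \<Longrightarrow> cmod (f x) \<le> K"
  shows "lp_norm V q f \<le> (real (card V) + 1) * K"
  using assms(2) unfolding goodq_def
proof
  assume qi: "q = \<infinity>"
  have "Max (insert 0 ((\<lambda>x. cmod (f x)) ` V)) \<le> K"
    using assms by (subst Max_le_iff) auto
  also have "K \<le> (real (card V) + 1) * K" using assms(3) by (simp add: algebra_simps)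
  finally show ?thesis using qi by (simp add: lpn_inf)
next
  assume "\<exists>q'. q = ereal q' \<and> q' \<ge> 1"
  then obtain q' where q: "q = ereal q'" "q' \<ge> 1" by blast
  let ?c = "real (card V)"
  have "(\<Sum>x\<in>V. cmod (f x) powr q') \<le> (\<Sum>x\<in>V. K powr q')"
    by (rule sum_mono, rule powr_mono2) (use q assms in auto)
  also have "\<dots> = ?c * K powr q'" by simp
  also have "\<dots> \<le> (?c + 1) powr q' * K powr q'"
  proof (rule mult_right_mono)
    have "?c \<le> (?c + 1) powr 1" by simp
    also have "\<dots> \<le> (?c + 1) powr q'" by (rule powr_mono) (use q in auto)
    finally show "?c \<le> (?c + 1) powr q'" .
  qed simp
  also have "\<dots> = ((?c + 1) * K) powr q'" by (simp add: powr_mult)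
  finally have le: "(\<Sum>x\<in>V. cmod (f x) powr q') \<le> ((?c + 1) * K) powr q'" .
  have "(\<Sum>x\<in>V. cmod (f x) powr q') powr (1/q') \<le> (((?c + 1) * K) powr q') powr (1/q')"
    using le q by (intro powr_mono2) (auto intro: sum_nonneg)
  also have "\<dots> = (?c + 1) * K" using q assms(3) by (simp add: powr_powr)
  finally show ?thesis using q by (simp add: lpn_fin)
qed

lemma lp_holder:
  assumes fin: "finite V" and c: "conjpq p q"
  shows "(\<Sum>x\<in>V. cmod (u x) * cmod (v x)) \<le> lp_norm V q u * lp_norm V (ereal p) v"
  using c unfolding conjpq_def
proof
  assume qi: "q = \<infinity> \<and> p = 1"
  have "(\<Sum>x\<in>V. cmod (u x) * cmod (v x)) \<le> (\<Sum>x\<in>V. lp_norm V q u * cmod (v x))"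
    by (rule sum_mono, rule mult_right_mono) (use lpn_point[OF fin _ , of _ q u] qi in \<open>auto simp: goodq_def\<close>)
  also have "\<dots> = lp_norm V q u * lp_norm V (ereal p) v"
    using qi by (simp add: lpn_fin sum_distrib_left abs_of_nonneg sum_nonneg)
  finally show ?thesis .
next
  assume "\<exists>q'. q = ereal q' \<and> q' > 1 \<and> p > 1 \<and> 1/p + 1/q' = 1"
  then obtain q' where q: "q = ereal q'" "q' > 1" "p > 1" "1/q' + 1/p = 1" by auto
  show ?thesis using holder_sum[OF fin q(2) q(3) q(4), of "\<lambda>x. cmod (u x)" "\<lambda>x. cmod (v x)"] q
    by (simp add: lpn_fin)
qed




context rg begin

lemma W_last_V: "x \<in> V \<Longrightarrow> \<gamma> \<in> nb_walks A x n \<Longrightarrow> last \<gamma> \<in> V"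
proof (induction n arbitrary: x \<gamma>)
  case 0 then show ?case by (simp add: W0)
next
  case (Suc n)
  then obtain y \<gamma>' where g: "\<gamma> = x # \<gamma>'" "A x y" "\<gamma>' \<in> nb_walks A y n" by (auto simp: W_Suc_mem)
  have "y \<in> V" using g(2) adjV by blast
  then have "last \<gamma>' \<in> V" using Suc.IH g(3) by blast
  then show ?case using g last_cons_W by simp
qed

lemma S_op_scale: "S_op d A n (\<lambda>x. c * f x) = (\<lambda>x. c * S_op d A n f x)"
  by (rule ext) (simp add: S_op_def sum_distrib_left mult.left_commute)

lemma S_pt_bound:
  assumes p: "1 \<le> p" and f: "lp_norm V (ereal p) f \<le> 1" and x: "x \<in> V"
  shows "cmod (S_op d A n f x) \<le> real d powr (- real n / 2) * real (card (nb_walks A x n))"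
proof -
  have fy: "cmod (f y) \<le> 1" if "y \<in> V" for y
    using lpn_point[OF finV that, of "ereal p" f] f p by (simp add: goodq_def)
  have "cmod (\<Sum>\<gamma>\<in>nb_walks A x n. f (last \<gamma>)) \<le> (\<Sum>\<gamma>\<in>nb_walks A x n. cmod (f (last \<gamma>)))"
    by (rule norm_sum)
  also have "\<dots> \<le> (\<Sum>\<gamma>\<in>nb_walks A x n. 1)"
    by (rule sum_mono) (use fy W_last_V[OF x] in auto)
  finally have "cmod (\<Sum>\<gamma>\<in>nb_walks A x n. f (last \<gamma>)) \<le> real (card (nb_walks A x n))" by simp
  then show ?thesis unfolding S_op_def norm_mult by (simp add: mult_left_mono)
qed

lemma bdd_S:
  assumes p: "1 \<le> p" and q: "goodq q"
  shows "bdd_above {lp_norm V q (S_op d A n f) | f. lp_norm V (ereal p) f \<le> 1}"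
proof -
  define K where "K = real d powr (- real n / 2) * (\<Sum>x\<in>V. real (card (nb_walks A x n)))"
  have K0: "K \<ge> 0" unfolding K_def by (simp add: sum_nonneg)
  show ?thesis unfolding bdd_above_def
  proof (intro exI ballI)
    fix y assume "y \<in> {lp_norm V q (S_op d A n f) | f. lp_norm V (ereal p) f \<le> 1}"
    then obtain f where y: "y = lp_norm V q (S_op d A n f)" and f: "lp_norm V (ereal p) f \<le> 1" by blast
    have "lp_norm V q (S_op d A n f) \<le> (real (card V) + 1) * K"
    proof (rule lpn_bound[OF finV q K0])
      fix x assume x: "x \<in> V"
      have "cmod (S_op d A n f x) \<le> real d powr (- real n / 2) * real (card (nb_walks A x n))"
        by (rule S_pt_bound[OF p f x])
      also have "\<dots> \<le> K" unfolding K_def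
        by (rule mult_left_mono, rule member_le_sum) (use x finV in auto)
      finally show "cmod (S_op d A n f x) \<le> K" .
    qed
    then show "y \<le> (real (card V) + 1) * K" using y by simp
  qed
qed

lemma op_le:
  assumes p: "1 \<le> p" and q: "goodq q" and f: "lp_norm V (ereal p) f \<le> 1"
  shows "lp_norm V q (S_op d A n f) \<le> op_norm V (ereal p) q (S_op d A n)"
  unfolding op_norm_def by (rule cSup_upper) (use f bdd_S[OF p q] in auto)

lemma op_scale:
  assumes p: "1 \<le> p" and q: "goodq q" and s: "lp_norm V (ereal p) g > 0"
  shows "lp_norm V q (S_op d A n g) \<le> op_norm V (ereal p) q (S_op d A n) * lp_norm V (ereal p) g"
proof -
  let ?s = "lp_norm V (ereal p) g"
  define h where "h = (\<lambda>x. of_real (1 / ?s) * g x)"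
  have gp: "goodq (ereal p)" using p by (simp add: goodq_def)
  have "lp_norm V (ereal p) h = (1 / ?s) * ?s" unfolding h_def by (rule lpn_scale[OF finV gp]) (use s in simp)
  then have "lp_norm V (ereal p) h = 1" using s by simp
  then have "lp_norm V q (S_op d A n h) \<le> op_norm V (ereal p) q (S_op d A n)" using op_le[OF p q] by simp
  moreover have "lp_norm V q (S_op d A n h) = (1 / ?s) * lp_norm V q (S_op d A n g)"
    unfolding h_def S_op_scale by (rule lpn_scale[OF finV q]) (use s in simp)
  ultimately show ?thesis using s by (simp add: field_simps)
qed

lemma Sv_ip_holder:
  assumes c: "conjpq p q"
  shows "cmod (ip (Sv j g) g) \<le> lp_norm V q (S_op d A j g) * lp_norm V (ereal p) g"
proof -
  have "ip (Sv j g) g = (\<Sum>x\<in>V. S_op d A j g x * cnj (g x))"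
    unfolding Sv_def ip_Rs_left by (simp add: ip_def)
  then have "cmod (ip (Sv j g) g) \<le> (\<Sum>x\<in>V. cmod (S_op d A j g x) * cmod (g x))"
    by (auto intro!: order_trans[OF norm_sum] simp: norm_mult)
  also have "\<dots> \<le> lp_norm V q (S_op d A j g) * lp_norm V (ereal p) g"
    by (rule lp_holder[OF finV c])
  finally show ?thesis .
qed

end

lemma powr_sq: "(x::real) \<ge> 0 \<Longrightarrow> (x powr a)^2 = x powr (2 * a)"
  by (simp add: power2_eq_square powr_add[symmetric])

lemma g_pnorm:
  fixes \<phi> :: "nat \<Rightarrow> complex"
  assumes fin: "finite V" and E: "E \<subseteq> V" and p: "1 \<le> p" "p < 2"
    and s1: "(\<Sum>x\<in>E. (cmod (\<phi> x))^2) \<le> 1"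
  shows "(lp_norm V (ereal p) (\<lambda>x. if x \<in> E then \<phi> x else 0))^2 \<le> real (card E) powr ((2 - p) / p)"
proof -
  have finE: "finite E" using fin E finite_subset by blast
  have "(\<Sum>x\<in>V. cmod (if x \<in> E then \<phi> x else 0) powr p) = (\<Sum>x\<in>V. if x \<in> E then cmod (\<phi> x) powr p else 0)"
    by (rule sum.cong) (use p in auto)
  also have "\<dots> = (\<Sum>x\<in>E. cmod (\<phi> x) powr p)"
    using E fin by (simp add: sum.If_cases Int_absorb1)
  finally have eqS: "(\<Sum>x\<in>V. cmod (if x \<in> E then \<phi> x else 0) powr p) = (\<Sum>x\<in>E. cmod (\<phi> x) powr p)" .
  define r where "r = 2 / p"
  define s where "s = 2 / (2 - p)"
  have r1: "r > 1" unfolding r_def using p by (simp add: field_simps)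
  have s1': "s > 1" unfolding s_def using p by (simp add: field_simps)
  have rs: "1/r + 1/s = 1" unfolding r_def s_def using p by (simp add: field_simps)
  have "(\<Sum>x\<in>E. cmod (\<phi> x) powr p * 1) \<le> (\<Sum>x\<in>E. (cmod (\<phi> x) powr p) powr r) powr (1/r) * (\<Sum>x\<in>E. 1 powr s) powr (1/s)"
    by (rule holder_sum[OF finE r1 s1' rs]) auto
  also have "(\<Sum>x\<in>E. (cmod (\<phi> x) powr p) powr r) = (\<Sum>x\<in>E. (cmod (\<phi> x))^2)"
    unfolding r_def using p by (intro sum.cong refl) (simp add: powr_powr)
  also have "(\<Sum>x\<in>E. (cmod (\<phi> x))^2) powr (1/r) \<le> 1"
    by (rule powr_le1) (use r1 s1 in \<open>auto simp: sum_nonneg\<close>)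
  also have "(\<Sum>x\<in>E. (1::real) powr s) powr (1/s) = real (card E) powr ((2 - p) / 2)"
    unfolding s_def using p by simp
  finally have le: "(\<Sum>x\<in>E. cmod (\<phi> x) powr p) \<le> real (card E) powr ((2 - p) / 2)"
    by (simp add: mult_right_mono)
  have "lp_norm V (ereal p) (\<lambda>x. if x \<in> E then \<phi> x else 0) = (\<Sum>x\<in>E. cmod (\<phi> x) powr p) powr (1/p)"
    by (simp add: lpn_fin eqS)
  also have "\<dots> \<le> (real (card E) powr ((2 - p) / 2)) powr (1/p)"
    by (rule powr_mono2) (use le p in \<open>auto simp: sum_nonneg\<close>)
  also have "\<dots> = real (card E) powr ((2 - p) / (2 * p))" by (simp add: powr_powr)
  finally have l1: "lp_norm V (ereal p) (\<lambda>x. if x \<in> E then \<phi> x else 0) \<le> real (card E) powr ((2 - p) / (2 * p))" .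
  have "(lp_norm V (ereal p) (\<lambda>x. if x \<in> E then \<phi> x else 0))^2 \<le> (real (card E) powr ((2 - p) / (2 * p)))^2"
    by (rule power_mono[OF l1]) (simp add: lpn_fin)
  also have "\<dots> = real (card E) powr (2 * ((2 - p) / (2 * p)))" by (rule powr_sq) simp
  also have "2 * ((2 - p) / (2 * p)) = (2 - p) / p" using p by (simp add: field_simps)
  finally show ?thesis .
qed




lemma geom_bound:
  fixes \<sigma> :: real
  assumes "0 < \<sigma>" "\<sigma> < 1"
  shows "(real n + 1) * (\<sigma>^2)^n \<le> \<sigma>^n / (1 - \<sigma>)"
proof -
  have "(real n + 1) * \<sigma>^n = (\<Sum>i<Suc n. \<sigma>^n)" by simp
  also have "\<dots> \<le> (\<Sum>i<Suc n. \<sigma>^i)" by (rule sum_mono) (use assms in \<open>auto intro: power_decreasing\<close>)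
  finally have h: "(real n + 1) * \<sigma>^n \<le> (\<Sum>i<Suc n. \<sigma>^i)" .
  have "(1 - \<sigma>) * (\<Sum>i<Suc n. \<sigma>^i) = 1 - \<sigma>^Suc n" by (rule one_diff_power_eq[symmetric])
  also have "\<dots> \<le> 1" using assms by simp
  finally have "(1 - \<sigma>) * ((real n + 1) * \<sigma>^n) \<le> 1"
    using h assms by (smt (verit) mult_left_mono)
  then have "(real n + 1) * \<sigma>^n \<le> 1 / (1 - \<sigma>)" using assms by (simp add: field_simps)
  then have "(real n + 1) * \<sigma>^n * \<sigma>^n \<le> 1 / (1 - \<sigma>) * \<sigma>^n" using assms by (intro mult_right_mono) auto
  then show ?thesis by (simp add: power_mult[symmetric] power2_eq_square power_mult_distrib algebra_simps)
qed

context rg begin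

lemma walk_to: "y \<in> V \<Longrightarrow> \<exists>x\<in>V. \<exists>\<gamma>\<in>nb_walks A x n. last \<gamma> = y"
proof (induction n)
  case 0 then show ?case by (auto simp: W0)
next
  case (Suc n)
  then obtain x \<gamma> where x: "x \<in> V" and g: "\<gamma> \<in> nb_walks A x n" and l: "last \<gamma> = y" by blast
  have "\<not> {z. A x z} \<subseteq> {\<gamma>!1}"
  proof
    assume "{z. A x z} \<subseteq> {\<gamma>!1}"
    then have "card {z. A x z} \<le> card {\<gamma>!1}" by (rule card_mono[rotated]) simp
    then show False using card_nbr[OF x] d1 by simp
  qed
  then obtain z where z: "A x z" "z \<noteq> \<gamma>!1" by blast
  have zV: "z \<in> V" using z adjV by blast
  have "z # \<gamma> \<in> nb_walks A z (Suc n)"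
    unfolding W_Suc_mem using z g symA by (intro exI[of _ x] exI[of _ \<gamma>]) auto
  moreover have "last (z # \<gamma>) = y" using last_cons_W[OF g] l by simp
  ultimately show ?case using zV by blast
qed

lemma lower_S:
  assumes p: "1 \<le> p" and q: "goodq q" and y: "y \<in> V"
  shows "real d powr (- real N / 2) \<le> op_norm V (ereal p) q (S_op d A N)"
proof -
  obtain x \<gamma> where x: "x \<in> V" and g: "\<gamma> \<in> nb_walks A x N" and l: "last \<gamma> = y"
    using walk_to[OF y] by blast
  define \<delta> where "\<delta> = (\<lambda>z. if z = y then (1::complex) else 0)"
  have "(\<Sum>z\<in>V. cmod (\<delta> z) powr p) = (\<Sum>z\<in>V. if z = y then 1 else 0)"
    by (rule sum.cong) (use p in \<open>auto simp: \<delta>_def\<close>)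
  also have "\<dots> = 1" using y finV by simp
  finally have "lp_norm V (ereal p) \<delta> = 1" by (simp add: lpn_fin)
  then have le: "lp_norm V q (S_op d A N \<delta>) \<le> op_norm V (ereal p) q (S_op d A N)"
    using op_le[OF p q] by simp
  have "(\<Sum>\<gamma>\<in>nb_walks A x N. \<delta> (last \<gamma>)) = of_nat (card {\<gamma> \<in> nb_walks A x N. last \<gamma> = y})"
    by (simp add: \<delta>_def sum.If_cases[OF W_fin] Int_def conj_commute)
  moreover have "card {\<gamma> \<in> nb_walks A x N. last \<gamma> = y} \<ge> 1"
  proof -
    have "{\<gamma> \<in> nb_walks A x N. last \<gamma> = y} \<noteq> {}" using g l by blast
    moreover have "finite {\<gamma> \<in> nb_walks A x N. last \<gamma> = y}" using W_fin by simp
    ultimately show ?thesis by (simp add: Suc_le_eq card_gt_0_iff)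
  qed
  ultimately have "cmod (S_op d A N \<delta> x) = real d powr (- real N / 2) * real (card {\<gamma> \<in> nb_walks A x N. last \<gamma> = y})"
    and c1: "1 \<le> real (card {\<gamma> \<in> nb_walks A x N. last \<gamma> = y})"
    unfolding S_op_def by (simp_all add: norm_mult)
  moreover have "real d powr (- real N / 2) * 1 \<le> real d powr (- real N / 2) * real (card {\<gamma> \<in> nb_walks A x N. last \<gamma> = y})"
    by (rule mult_left_mono[OF c1]) simp
  ultimately have "cmod (S_op d A N \<delta> x) \<ge> real d powr (- real N / 2)" by simp
  also have "cmod (S_op d A N \<delta> x) \<le> lp_norm V q (S_op d A N \<delta>)" by (rule lpn_point[OF finV x q])
  finally show ?thesis using le by simp
qed

end



context rg begin

lemma main_bound:
  fixes \<phi> :: "nat \<Rightarrow> complex"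
  assumes d2: "2 \<le> d" and al: "0 < \<alpha>" "\<alpha> \<le> 1/2" and C: "C > 0" and c: "conjpq p q"
    and p: "1 \<le> p" "p < 2"
    and hyp: "\<forall>n\<le>N. op_norm V (ereal p) q (S_op d A n) \<le> C * real d powr (- \<alpha> * real n)"
    and eig: "laplace_eigenfunction d V A \<phi>" and n\<phi>: "(\<Sum>x\<in>V. (cmod (\<phi> x))^2) = 1"
    and E: "E \<subseteq> V" and a\<epsilon>: "(\<Sum>x\<in>E. (cmod (\<phi> x))^2) > \<epsilon>" and \<epsilon>: "\<epsilon> > 0"
    and m1: "1 \<le> m" and m5: "5 / \<epsilon>^2 \<le> real m" and n01: "1 \<le> n0" and nN: "4*m*n0 \<le> N"
  shows "(1 - real d powr (-\<alpha>/2)) / (2 * real m * (real d + 1) * C) * real d powr (\<alpha> * real n0 / 2)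
         < real (card E) powr ((2 - p) / p)"
proof (rule ccontr)
  assume neg: "\<not> ?thesis"
  define a where "a = (\<Sum>x\<in>E. (cmod (\<phi> x))^2)"
  define g where "g = (\<lambda>x. if x \<in> E then \<phi> x else 0)"
  define M where "M = real (card E) powr ((2 - p) / p)"
  define \<sigma> where "\<sigma> = real d powr (-\<alpha>/2)"
  define \<rho> where "\<rho> = real d powr (-\<alpha>)"
  define B where "B = C * M"
  define \<kappa> where "\<kappa> = (1 - \<sigma>) / (2 * real m * (real d + 1) * C)"
  have dgt1: "real d > 1" using d2 by simp
  have gq: "goodq q" using conjpq_good[OF c] by blast
  have finE: "finite E" using E finV finite_subset by blast
  obtain ev where ev: "\<And>x. x \<in> V \<Longrightarrow> laplacian d A \<phi> x = ev * \<phi> x"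
    using eig unfolding laplace_eigenfunction_def by blast
  define s0 where "s0 = sqrt (real d) / (real d + 1)"
  have s0: "s0 > 0" unfolding s0_def using dpos by simp
  define \<mu> where "\<mu> = (ev + 1) / of_real s0"
  have Teig: "T \<phi> x = \<mu> * \<phi> x" if x: "x \<in> V" for x
  proof -
    have "of_real s0 * T \<phi> x - \<phi> x = ev * \<phi> x"
      using ev[OF x] by (simp add: laplacian_def T_def s0_def)
    then have "of_real s0 * T \<phi> x = (ev + 1) * \<phi> x" by (simp add: algebra_simps)
    then show ?thesis using s0 by (simp add: \<mu>_def field_simps)
  qed
  have nphi: "nrm \<phi> = 1" using n\<phi> by (simp add: nrm_def)
  have gV: "(\<Sum>x\<in>V. F (g x)) = (\<Sum>x\<in>E. F (\<phi> x))" if F0: "F 0 = 0" for F :: "complex \<Rightarrow> 'b::comm_monoid_add"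
  proof -
    have "(\<Sum>x\<in>V. F (g x)) = (\<Sum>x\<in>V. if x \<in> E then F (\<phi> x) else 0)"
      by (rule sum.cong) (auto simp: g_def F0)
    also have "\<dots> = (\<Sum>x\<in>E. F (\<phi> x))" using E finV by (simp add: sum.If_cases Int_absorb1)
    finally show ?thesis .
  qed
  have ng: "nrm g = a" unfolding nrm_def a_def by (rule gV) simp
  have igp: "ip g \<phi> = of_real a"
  proof -
    have "ip g \<phi> = (\<Sum>x\<in>V. if x \<in> E then \<phi> x * cnj (\<phi> x) else 0)"
      unfolding ip_def by (rule sum.cong) (auto simp: g_def)
    also have "\<dots> = (\<Sum>x\<in>E. \<phi> x * cnj (\<phi> x))" using E finV by (simp add: sum.If_cases Int_absorb1)
    also have "\<dots> = of_real a" unfolding a_def of_real_sum by (rule sum.cong[OF refl]) (rule complex_norm_square[symmetric])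
    finally show ?thesis .
  qed
  have a0: "0 \<le> a" unfolding a_def by (simp add: sum_nonneg)
  have a1: "a \<le> 1" unfolding a_def using n\<phi> E finV by (metis sum_mono2 zero_le_power2)
  have aeps: "a > \<epsilon>" using a\<epsilon> a_def by simp
  have lpg0: "lp_norm V (ereal p) g \<ge> 0" by (rule lpn_nonneg[OF finV]) (use p in \<open>simp add: goodq_def\<close>)
  have lpgpos: "lp_norm V (ereal p) g > 0"
  proof (rule ccontr)
    assume "\<not> lp_norm V (ereal p) g > 0"
    then have "lp_norm V (ereal p) g = 0" using lpg0 by simp
    then have s: "(\<Sum>x\<in>V. cmod (g x) powr p) = 0" by (simp add: lpn_fin)
    have "g x = 0" if "x \<in> V" for x
      using sum_powr_zero[where I=V and r=p and a="\<lambda>x. cmod (g x)" and i=x] s p that finV by simp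
    then have "nrm g = 0" by (simp add: nrm_def)
    then show False using ng aeps \<epsilon> by simp
  qed
  have lpgM: "(lp_norm V (ereal p) g)^2 \<le> M"
    unfolding M_def g_def by (rule g_pnorm[OF finV E p]) (use a1 a_def in simp)
  have M0: "M \<ge> 0" unfolding M_def by simp
  have B0: "B \<ge> 0" unfolding B_def using C M0 by simp
  have rho0: "\<rho> > 0" unfolding \<rho>_def using dpos by simp
  have rhoj: "\<rho>^j = real d powr (- \<alpha> * real j)" for j
    unfolding \<rho>_def using dpos by (simp add: powr_power mult.commute)
  have rd: "1 / real d \<le> \<rho>^2"
  proof -
    have "\<rho>^2 = real d powr (- \<alpha> * 2)" using rhoj[of 2] by simp
    moreover have "real d powr (-1) \<le> real d powr (- \<alpha> * 2)" using al dgt1 by (intro powr_mono) auto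
    ultimately show ?thesis using dpos by (simp add: powr_minus_divide)
  qed
  have Sb: "cmod (ip (Sv j g) g) \<le> B * \<rho>^j" if j: "j \<le> N" for j
  proof -
    have "cmod (ip (Sv j g) g) \<le> lp_norm V q (S_op d A j g) * lp_norm V (ereal p) g"
      by (rule Sv_ip_holder[OF c])
    also have "\<dots> \<le> (op_norm V (ereal p) q (S_op d A j) * lp_norm V (ereal p) g) * lp_norm V (ereal p) g"
      by (rule mult_right_mono[OF op_scale[OF p(1) gq lpgpos] lpg0])
    also have "\<dots> = op_norm V (ereal p) q (S_op d A j) * (lp_norm V (ereal p) g)^2"
      by (simp add: power2_eq_square)
    also have "\<dots> \<le> (C * real d powr (- \<alpha> * real j)) * M"
      using hyp j lpgM C by (intro mult_mono) auto
    also have "\<dots> = B * \<rho>^j" by (simp add: B_def rhoj)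
    finally show ?thesis .
  qed
  have Db: "cmod (ip (Dop n g) g) \<le> (real d + 1) * (n + 1) * B * \<rho>^n" if "1 \<le> n" "n \<le> N" for n
    by (rule D_bound[OF B0 rho0 rd Sb]) (use that in auto)
  have sig0: "\<sigma> > 0" unfolding \<sigma>_def using dpos by simp
  have sig1: "\<sigma> < 1" unfolding \<sigma>_def using dgt1 al by (intro powr_less_one) auto
  have sig2: "\<sigma>^2 = \<rho>" unfolding \<sigma>_def \<rho>_def using dpos by (simp add: powr_power)
  have sign0: "\<sigma>^n0 * real d powr (\<alpha> * real n0 / 2) = 1"
  proof -
    have e: "\<sigma>^n0 = real d powr (real n0 * (-\<alpha>/2))" unfolding \<sigma>_def using dpos by (simp add: powr_power)
    have "\<sigma>^n0 * real d powr (\<alpha> * real n0 / 2) = real d powr (real n0 * (-\<alpha>/2) + \<alpha> * real n0 / 2)"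
      unfolding e by (rule powr_add[symmetric])
    also have "real n0 * (-\<alpha>/2) + \<alpha> * real n0 / 2 = 0" by (simp add: algebra_simps)
    finally show ?thesis using dpos by simp
  qed
  have Mle: "M \<le> \<kappa> * real d powr (\<alpha> * real n0 / 2)" using neg by (simp add: M_def \<kappa>_def \<sigma>_def)
  have key: "(real d + 1) * B * \<sigma>^n0 / (1 - \<sigma>) \<le> 1 / (2 * real m)"
  proof -
    have "(real d + 1) * B * \<sigma>^n0 / (1 - \<sigma>) = (real d + 1) * C * (M * \<sigma>^n0) / (1 - \<sigma>)"
      by (simp add: B_def algebra_simps)
    also have "\<dots> \<le> (real d + 1) * C * (\<kappa> * real d powr (\<alpha> * real n0 / 2) * \<sigma>^n0) / (1 - \<sigma>)"
      using Mle sig0 sig1 C by (intro divide_right_mono mult_left_mono mult_right_mono) auto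
    also have "\<dots> = (real d + 1) * C * \<kappa> / (1 - \<sigma>)" using sign0 by (simp add: algebra_simps)
    also have "\<dots> = 1 / (2 * real m)"
    proof -
      have hm: "real m > 0" using m1 by simp
      have hs: "1 - \<sigma> > 0" using sig1 by simp
      have hd: "real d + 1 > 0" using dpos by simp
      define X where "X = 2 * real m * (real d + 1) * C"
      have X0: "X > 0" unfolding X_def using hm hd C by simp
      have ne: "\<sigma> \<noteq> 1" "1 - \<sigma> \<noteq> 0" "X \<noteq> 0" using hs X0 by auto
      have "(real d + 1) * C * \<kappa> / (1 - \<sigma>) = ((real d + 1) * C) / X"
        unfolding \<kappa>_def X_def[symmetric] using ne by (simp add: field_simps)
      also have "((real d + 1) * C) / X = 1 / (2 * real m)" unfolding X_def using hm hd C by simp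
      finally show ?thesis .
    qed
    finally show ?thesis .
  qed
  have small: "cmod (ip (Dop n g) g) \<le> 1 / (2 * real m)" if n: "n0 \<le> n" "n \<le> 4*m*n0" for n
  proof -
    have nN': "n \<le> N" using n nN by simp
    have "cmod (ip (Dop n g) g) \<le> (real d + 1) * B * ((real n + 1) * (\<sigma>^2)^n)"
      using Db[of n] n n01 nN' sig2 by (simp add: algebra_simps)
    also have "\<dots> \<le> (real d + 1) * B * (\<sigma>^n / (1 - \<sigma>))"
      by (rule mult_left_mono[OF geom_bound[OF sig0 sig1]]) (use B0 in simp)
    also have "\<dots> \<le> (real d + 1) * B * (\<sigma>^n0 / (1 - \<sigma>))"
      using sig0 sig1 B0 n by (intro mult_left_mono divide_right_mono power_decreasing) auto
    also have "\<dots> \<le> 1 / (2 * real m)" using key by simp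
    finally show ?thesis .
  qed
  have "7 * real m * a^2 \<le> 32"
    by (rule core[OF Teig nphi igp ng a0 a1 m1 n01 small])
  moreover have "7 * real m * a^2 > 32"
  proof -
    have "\<epsilon>^2 < a^2" using aeps \<epsilon> by (intro power_strict_mono) auto
    have "5 \<le> real m * \<epsilon>^2" using m5 \<epsilon> by (simp add: field_simps)
    also have "\<dots> \<le> real m * a^2" using \<open>\<epsilon>^2 < a^2\<close> by (intro mult_left_mono) auto
    finally show ?thesis by simp
  qed
  ultimately show False by simp
qed

end



lemma cardE_ge1:
  assumes reg: "regular_graph (d + 1) V A" and E: "E \<subseteq> V"
    and s: "(\<Sum>x\<in>E. (cmod (\<phi> x))\<^sup>2) > \<epsilon>" and e: "\<epsilon> > 0"
  shows "real (card E) \<ge> 1"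
proof -
  have "finite V" using reg unfolding regular_graph_def graph_def by blast
  then have "finite E" using E finite_subset by blast
  moreover have "E \<noteq> {}" using s e by auto
  ultimately show ?thesis by (simp add: Suc_le_eq card_gt_0_iff)
qed

lemma case_big:
  fixes d :: nat and \<epsilon> C \<alpha> p :: real and q :: ereal
  assumes d2: "d \<ge> 2" and e: "\<epsilon> > 0" and C: "C > 0" and al: "\<alpha> > 1/2"
    and p: "1 \<le> p" "p < 2" and cpq: "conjpq p q" and \<delta>0: "\<delta> \<ge> 0"
  shows "\<exists>c>0. \<forall>(V::nat set) A (N::nat).
     regular_graph (d + 1) V A \<and> N \<ge> 1 \<and>
     (\<forall>n\<le>N. op_norm V (ereal p) q (S_op d A n) \<le> C * real d powr (- \<alpha> * real n))
     \<longrightarrow> (\<forall>\<phi> E. laplace_eigenfunction d V A \<phi> \<and> (\<Sum>x\<in>V. (cmod (\<phi> x))\<^sup>2) = 1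
            \<and> E \<subseteq> V \<and> (\<Sum>x\<in>E. (cmod (\<phi> x))\<^sup>2) > \<epsilon>
          \<longrightarrow> real (card E) \<ge> c * real d powr (\<delta> * real N))"
proof -
  define Nb where "Nb = max 0 (ln C / ((\<alpha> - 1/2) * ln (real d)))"
  define c where "c = real d powr (- \<delta> * Nb)"
  have dgt1: "real d > 1" using d2 by simp
  have lnd: "ln (real d) > 0" using dgt1 by simp
  have gq: "goodq q" using conjpq_good[OF cpq] by blast
  show ?thesis
  proof (intro exI[of _ c] conjI allI impI)
    show "c > 0" unfolding c_def using dgt1 by simp
    fix V :: "nat set" and A N \<phi> E
    assume H: "regular_graph (d + 1) V A \<and> N \<ge> 1 \<and>
     (\<forall>n\<le>N. op_norm V (ereal p) q (S_op d A n) \<le> C * real d powr (- \<alpha> * real n))"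
    assume H2: "laplace_eigenfunction d V A \<phi> \<and> (\<Sum>x\<in>V. (cmod (\<phi> x))\<^sup>2) = 1
            \<and> E \<subseteq> V \<and> (\<Sum>x\<in>E. (cmod (\<phi> x))\<^sup>2) > \<epsilon>"
    interpret G: rg d V A using H d2 by unfold_locales auto
    obtain y where y: "y \<in> V" using H2 unfolding laplace_eigenfunction_def by blast
    have "real d powr (- real N / 2) \<le> op_norm V (ereal p) q (S_op d A N)"
      by (rule G.lower_S[OF p(1) gq y])
    also have "\<dots> \<le> C * real d powr (- \<alpha> * real N)" using H by blast
    finally have l1: "real d powr (- real N / 2) \<le> C * real d powr (- \<alpha> * real N)" .
    have "real d powr ((\<alpha> - 1/2) * real N) = real d powr (- real N / 2) * real d powr (\<alpha> * real N)"
      by (simp add: powr_add[symmetric] algebra_simps)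
    also have "\<dots> \<le> C * real d powr (- \<alpha> * real N) * real d powr (\<alpha> * real N)"
      by (rule mult_right_mono[OF l1]) simp
    also have "\<dots> = C" using dgt1 by (simp add: powr_add[symmetric] mult.assoc)
    finally have l2: "real d powr ((\<alpha> - 1/2) * real N) \<le> C" .
    have "ln (real d powr ((\<alpha> - 1/2) * real N)) \<le> ln C" using l2 dgt1 C by (subst ln_le_cancel_iff) auto
    then have "(\<alpha> - 1/2) * real N * ln (real d) \<le> ln C" using dgt1 by (simp add: ln_powr)
    then have "real N \<le> ln C / ((\<alpha> - 1/2) * ln (real d))" using al lnd by (simp add: field_simps)
    then have NNb: "real N \<le> Nb" unfolding Nb_def by simp
    have "c * real d powr (\<delta> * real N) = real d powr (\<delta> * (real N - Nb))"
      unfolding c_def by (simp add: powr_add[symmetric] algebra_simps)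
    also have "\<dots> \<le> real d powr 0"
      using dgt1 NNb \<delta>0 by (subst powr_le_cancel_iff) (auto simp: mult_nonneg_nonpos)
    also have "\<dots> = 1" using dgt1 by simp
    also have "1 \<le> real (card E)" using H H2 e by (intro cardE_ge1[where \<phi>=\<phi>]) auto
    finally show "real (card E) \<ge> c * real d powr (\<delta> * real N)" .
  qed
qed




lemma case_small:
  fixes d :: nat and \<epsilon> C \<alpha> p :: real and q :: ereal
  assumes d2: "d \<ge> 2" and e: "\<epsilon> > 0" and C: "C > 0" and al: "\<alpha> > 0" "\<alpha> \<le> 1/2"
    and p: "1 \<le> p" "p < 2" and cpq: "conjpq p q"
    and \<delta>def: "\<delta> = 2 powr (-7) * (\<alpha> * p / (2 - p)) * \<epsilon>\<^sup>2"
  shows "\<exists>c>0. \<forall>(V::nat set) A (N::nat).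
     regular_graph (d + 1) V A \<and> N \<ge> 1 \<and>
     (\<forall>n\<le>N. op_norm V (ereal p) q (S_op d A n) \<le> C * real d powr (- \<alpha> * real n))
     \<longrightarrow> (\<forall>\<phi> E. laplace_eigenfunction d V A \<phi> \<and> (\<Sum>x\<in>V. (cmod (\<phi> x))\<^sup>2) = 1
            \<and> E \<subseteq> V \<and> (\<Sum>x\<in>E. (cmod (\<phi> x))\<^sup>2) > \<epsilon>
          \<longrightarrow> real (card E) \<ge> c * real d powr (\<delta> * real N))"
proof -
  define m where "m = nat \<lceil>5 / \<epsilon>^2\<rceil>"
  define \<sigma> where "\<sigma> = real d powr (-\<alpha>/2)"
  define \<kappa> where "\<kappa> = (1 - \<sigma>) / (2 * real m * (real d + 1) * C)"
  define \<gamma> where "\<gamma> = \<alpha> * p / (2 * (2 - p))"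
  define c1 where "c1 = \<kappa> powr (p / (2 - p)) * real d powr (- \<gamma>)"
  define c2 where "c2 = real d powr (- \<delta> * (4 * real m))"
  define c where "c = min c1 c2"
  have dgt1: "real d > 1" using d2 by simp
  have m5: "5 / \<epsilon>^2 \<le> real m" unfolding m_def by linarith
  have m5': "real m < 5 / \<epsilon>^2 + 1" unfolding m_def
    using e by (simp add: of_nat_nat) linarith
  have m1: "1 \<le> m"
  proof -
    have "0 < 5 / \<epsilon>^2" using e by simp
    then have "0 < real m" using m5 by linarith
    then show ?thesis by simp
  qed
  have sig1: "\<sigma> < 1" unfolding \<sigma>_def using dgt1 al by (intro powr_less_one) auto
  have kpos: "\<kappa> > 0" unfolding \<kappa>_def using sig1 m1 C by simp
  have \<delta>0: "\<delta> \<ge> 0" unfolding \<delta>def using al p by simp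
  have cpos: "c > 0" unfolding c_def c1_def c2_def using kpos dgt1 by simp
  show ?thesis
  proof (intro exI[of _ c] conjI allI impI)
    show "c > 0" by (rule cpos)
    fix V :: "nat set" and A N \<phi> E
    assume H: "regular_graph (d + 1) V A \<and> N \<ge> 1 \<and>
     (\<forall>n\<le>N. op_norm V (ereal p) q (S_op d A n) \<le> C * real d powr (- \<alpha> * real n))"
    assume H2: "laplace_eigenfunction d V A \<phi> \<and> (\<Sum>x\<in>V. (cmod (\<phi> x))\<^sup>2) = 1
            \<and> E \<subseteq> V \<and> (\<Sum>x\<in>E. (cmod (\<phi> x))\<^sup>2) > \<epsilon>"
    interpret G: rg d V A using H d2 by unfold_locales auto
    have cE: "1 \<le> real (card E)" using H H2 e by (intro cardE_ge1[where \<phi>=\<phi>]) auto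
    have eps1: "\<epsilon> < 1"
    proof -
      have "(\<Sum>x\<in>E. (cmod (\<phi> x))\<^sup>2) \<le> (\<Sum>x\<in>V. (cmod (\<phi> x))\<^sup>2)"
        using H2 G.finV by (intro sum_mono2) auto
      then show ?thesis using H2 by simp
    qed
    define n0 where "n0 = N div (4 * m)"
    show "real (card E) \<ge> c * real d powr (\<delta> * real N)"
    proof (cases "n0 = 0")
      case True
      then have "N < 4 * m" unfolding n0_def using m1 by (simp add: div_eq_0_iff)
      then have NN: "real N \<le> 4 * real m" by simp
      have "c * real d powr (\<delta> * real N) \<le> c2 * real d powr (\<delta> * real N)"
        unfolding c_def by (intro mult_right_mono) auto
      also have "\<dots> = real d powr (\<delta> * (real N - 4 * real m))"
        unfolding c2_def by (simp add: powr_add[symmetric] algebra_simps)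
      also have "\<dots> \<le> real d powr 0"
        using dgt1 NN \<delta>0 by (subst powr_le_cancel_iff) (auto simp: mult_nonneg_nonpos)
      also have "\<dots> \<le> real (card E)" using dgt1 cE by simp
      finally show ?thesis .
    next
      case False
      then have n01: "1 \<le> n0" by simp
      have nN: "4 * m * n0 \<le> N" unfolding n0_def by (simp add: mult.commute)
      have "\<kappa> * real d powr (\<alpha> * real n0 / 2) < real (card E) powr ((2 - p) / p)"
        unfolding \<kappa>_def \<sigma>_def
        by (rule G.main_bound[OF d2 al C cpq p]) (use H H2 e m1 m5 n01 nN in auto)
      then have "(\<kappa> * real d powr (\<alpha> * real n0 / 2)) powr (p / (2 - p))
          \<le> (real (card E) powr ((2 - p) / p)) powr (p / (2 - p))"
        using kpos p by (intro powr_mono2) auto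
      also have "\<dots> = real (card E)" using p by (simp add: powr_powr)
      also have "(\<kappa> * real d powr (\<alpha> * real n0 / 2)) powr (p / (2 - p)) = \<kappa> powr (p / (2 - p)) * real d powr (\<gamma> * real n0)"
      proof -
        have e1: "(\<kappa> * real d powr (\<alpha> * real n0 / 2)) powr (p / (2 - p)) = \<kappa> powr (p / (2 - p)) * (real d powr (\<alpha> * real n0 / 2)) powr (p / (2 - p))"
          by (rule powr_mult)
        have e2: "(real d powr (\<alpha> * real n0 / 2)) powr (p / (2 - p)) = real d powr (\<alpha> * real n0 / 2 * (p / (2 - p)))"
          by (rule powr_powr)
        have e3: "\<alpha> * real n0 / 2 * (p / (2 - p)) = \<gamma> * real n0" unfolding \<gamma>_def using p by (simp add: field_simps)
        show ?thesis unfolding e1 e2 e3 ..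
      qed
      finally have b1: "\<kappa> powr (p / (2 - p)) * real d powr (\<gamma> * real n0) \<le> real (card E)" .
      have n0N: "real N / (4 * real m) - 1 \<le> real n0"
      proof -
        have r: "N mod (4 * m) < 4 * m" using m1 by simp
        have q: "4 * m * n0 + N mod (4 * m) = N" unfolding n0_def by (rule mult_div_mod_eq)
        have "N < 4 * m * (n0 + 1)" using r q by (simp add: algebra_simps)
        then have "real N < real (4 * m * (n0 + 1))" by (simp only: of_nat_less_iff)
        then have "real N < 4 * real m * (real n0 + 1)" by (simp add: algebra_simps)
        then show ?thesis using m1 by (simp add: field_simps)
      qed
      have gam0: "\<gamma> \<ge> 0" unfolding \<gamma>_def using al p by simp
      have dg: "\<delta> * real N \<le> \<gamma> / (4 * real m) * real N"
      proof -
        have me: "real m * \<epsilon>^2 \<le> 16"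
        proof -
          have "real m * \<epsilon>^2 < (5 / \<epsilon>^2 + 1) * \<epsilon>^2" using m5' e by (intro mult_strict_right_mono) auto
          also have "\<dots> = 5 + \<epsilon>^2" using e by (simp add: field_simps)
          also have "\<dots> \<le> 6" using eps1 e by (simp add: power_le_one)
          finally show ?thesis by simp
        qed
        have "\<delta> = \<alpha> * p / (2 - p) * \<epsilon>^2 / 128" unfolding \<delta>def by (simp add: powr_minus_divide)
        also have "\<dots> \<le> \<alpha> * p / (2 - p) * (16 / real m) / 128"
        proof -
          have "\<epsilon>^2 \<le> 16 / real m" using me m1 by (simp add: field_simps)
          moreover have "0 \<le> \<alpha> * p / (2 - p)" using al p by simp
          ultimately have "\<alpha> * p / (2 - p) * \<epsilon>^2 \<le> \<alpha> * p / (2 - p) * (16 / real m)" by (rule mult_left_mono)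
          then show ?thesis by (rule divide_right_mono) simp
        qed
        also have "\<dots> = \<gamma> / (4 * real m)" unfolding \<gamma>_def using m1 p by (simp add: field_simps)
        finally have dle: "\<delta> \<le> \<gamma> / (4 * real m)" .
        show ?thesis by (rule mult_right_mono[OF dle]) simp
      qed
      have "c * real d powr (\<delta> * real N) \<le> c1 * real d powr (\<delta> * real N)"
        unfolding c_def by (intro mult_right_mono) auto
      also have "\<dots> = \<kappa> powr (p / (2 - p)) * real d powr (\<delta> * real N - \<gamma>)"
      proof -
        have "real d powr (- \<gamma>) * real d powr (\<delta> * real N) = real d powr (\<delta> * real N - \<gamma>)"
          by (simp add: powr_add[symmetric])
        then show ?thesis unfolding c1_def by (simp only: mult.assoc)
      qed
      also have "\<dots> \<le> \<kappa> powr (p / (2 - p)) * real d powr (\<gamma> * real n0)"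
      proof (rule mult_left_mono)
        have "\<delta> * real N - \<gamma> \<le> \<gamma> / (4 * real m) * real N - \<gamma>" using dg by simp
        also have "\<dots> = \<gamma> * (real N / (4 * real m) - 1)" using m1 by (simp add: field_simps)
        also have "\<dots> \<le> \<gamma> * real n0" using n0N gam0 by (intro mult_left_mono) auto
        finally show "real d powr (\<delta> * real N - \<gamma>) \<le> real d powr (\<gamma> * real n0)"
          using dgt1 by simp
      qed simp
      also have "\<dots> \<le> real (card E)" by (rule b1)
      finally show ?thesis .
    qed
  qed
qed

theorem theorem1:
  fixes d :: nat and \<epsilon> C \<alpha> p :: real and q :: ereal
  assumes "d \<ge> 1" and "\<epsilon> > 0" and "C > 0" and "\<alpha> > 0"
    and "1 \<le> p" and "p < 2" and "2 < q" and "1 / ereal p + 1 / q = 1"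
  shows "\<exists>c>0. \<forall>(V::nat set) A (N::nat).
     regular_graph (d + 1) V A \<and> N \<ge> 1 \<and>
     (\<forall>n\<le>N. op_norm V (ereal p) q (S_op d A n) \<le> C * real d powr (- \<alpha> * real n))
     \<longrightarrow> (\<forall>\<phi> E. laplace_eigenfunction d V A \<phi> \<and> (\<Sum>x\<in>V. (cmod (\<phi> x))\<^sup>2) = 1
            \<and> E \<subseteq> V \<and> (\<Sum>x\<in>E. (cmod (\<phi> x))\<^sup>2) > \<epsilon>
          \<longrightarrow> real (card E) \<ge> c * real d powr ((2 powr (-7) * (\<alpha> * p / (2 - p)) * \<epsilon>\<^sup>2) * real N))"
proof -
  have cpq: "conjpq p q" by (rule conjpq_intro) (use assms in auto)
  define \<delta> where "\<delta> = 2 powr (-7) * (\<alpha> * p / (2 - p)) * \<epsilon>\<^sup>2"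
  have \<delta>0: "\<delta> \<ge> 0" unfolding \<delta>_def using assms by simp
  consider "d = 1" | "d \<ge> 2 \<and> \<alpha> > 1/2" | "d \<ge> 2 \<and> \<alpha> \<le> 1/2" using assms(1) by linarith
  then show ?thesis
  proof cases
    case 1
    show ?thesis
    proof (intro exI[of _ 1] conjI allI impI)
      fix V :: "nat set" and A N \<phi> E
      assume H: "regular_graph (d + 1) V A \<and> N \<ge> 1 \<and>
        (\<forall>n\<le>N. op_norm V (ereal p) q (S_op d A n) \<le> C * real d powr (- \<alpha> * real n))"
      assume H2: "laplace_eigenfunction d V A \<phi> \<and> (\<Sum>x\<in>V. (cmod (\<phi> x))\<^sup>2) = 1
            \<and> E \<subseteq> V \<and> (\<Sum>x\<in>E. (cmod (\<phi> x))\<^sup>2) > \<epsilon>"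
      have "1 \<le> real (card E)" using H H2 assms(2) by (intro cardE_ge1[where \<phi>=\<phi>]) auto
      then show "real (card E) \<ge> 1 * real d powr ((2 powr (-7) * (\<alpha> * p / (2 - p)) * \<epsilon>\<^sup>2) * real N)"
        using 1 by simp
    qed simp
  next
    case 2
    show ?thesis using case_big[OF _ assms(2) assms(3) _ assms(5) assms(6) cpq \<delta>0] 2 unfolding \<delta>_def by blast
  next
    case 3
    show ?thesis using case_small[OF _ assms(2) assms(3) assms(4) _ assms(5) assms(6) cpq \<delta>_def] 3
      unfolding \<delta>_def by blast
  qed
qed


end
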